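(* Let the system $x^+=f(x,u)$, $\zeta=g(x,u)$ be flat with flat output $y=\varphi(\zeta_{[-Q_1,-1]},x,u,u_{[1,Q_2]})$, and let $z^+=\psi_x(z,v)$, $\eta=\psi_u(z,v)$ be its associated system. Then: (i) The associated system is backward-flat with backward-flat output $\hat y=\varphi(\psi_x(z,v),\psi_u(z,v),\eta_{[-1,-Q_2]})=\hat\varphi(\eta_{[-Q_2,-1]},z,v)$ if and only if the original system is forward-flat with forward-flat output $y=\varphi(x,u,u_{[1,Q_2]})$. (ii) The associated system is forward-flat with forward-flat output $\hat y=\varphi(v_{[Q_1,1]},\psi_x(z,v),\psi_u(z,v))=\hat\varphi(z,v,v_{[1,Q_1]})$ if and only if the original system is backward-flat with backward-flat output $y=\varphi(\zeta_{[-Q_1,-1]},x,u)$. (In these formulas, $\zeta_{[-j]}$ is replaced by $v_{[j]}$ and $u_{[j]}$ by $\eta_{[-j]}$, componentwise.)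
   Context: Consider a nonlinear time-invariant discrete-time system $x^{i,+}=f^i(x,u)$, $i=1,\dots,n$, with $x\in\mathbb{R}^n$, $u\in\mathbb{R}^m$, smooth $f$, $\operatorname{rank}(\partial_u f)=m$, and $\operatorname{rank}(\partial_{(x,u)}f)=n$. Choose $m$ smooth functions $g(x,u)$ such that $(x,u)\mapsto(f(x,u),g(x,u))$ is a local diffeomorphism, with local inverse $x=\psi_x(x^+,\zeta)$, $u=\psi_u(x^+,\zeta)$. The associated system is $z^+=\psi_x(z,v)$, $\eta=\psi_u(z,v)$, $z\in\mathbb{R}^n$, $v,\eta\in\mathbb{R}^m$. Notation: $w_{[\alpha]}$ is the $\alpha$-th forward shift, $w_{[-\alpha]}$ the $\alpha$-th backward shift; for multi-indices, $y_{[-S_1,S_2]}$ denotes all $y^j_{[i]}$ with $-s_{1,j}\le i\le s_{2,j}$. Flatness: the system is flat around an equilibrium if there exist an $m$-tuple $y=\varphi(\zeta_{[-Q_1,-1]},x,u,u_{[1,Q_2]})$ (flat output, with $\zeta=g(x,u)$) and maps $x=F_x(y_{[-R_1,R_2-1]})$, $u=F_u(y_{[-R_1,R_2]})$ establishing locally a one-to-one correspondence between system trajectories and arbitrary sequences $y(k)\in\mathbb{R}^m$. Forward-flat: flat with a flat output $y=\varphi(x,u,u_{[1,Q_2]})$ (no backward shifts) and $R_1=(0,\dots,0)$, i.e. $x=F_x(y_{[0,R_2-1]})$, $u=F_u(y_{[0,R_2]})$. Backward-flat: flat with a flat output $y=\varphi(\zeta_{[-Q_1,-1]},x,u)$ (no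 forward shifts) and $R_2=(0,\dots,0)$, i.e. $x=F_x(y_{[-R_1,-1]})$, $u=F_u(y_{[-R_1,0]})$. The same definitions apply to the associated system with $(z,v,\eta,\psi_x,\psi_u)$ in place of $(x,u,\zeta,f,g)$. *)

theory Defs
  imports "HOL-Analysis.Analysis"
begin

fun iter_pd :: "'a::euclidean_space list \<Rightarrow> ('a \<Rightarrow> 'b::real_normed_vector) \<Rightarrow> 'a \<Rightarrow> 'b" where
  "iter_pd [] F = F"
| "iter_pd (d # ds) F = (\<lambda>w. vector_derivative (\<lambda>t. iter_pd ds F (w + t *\<^sub>R d)) (at 0))"

definition Cinf_on :: "'a::euclidean_space set \<Rightarrow> ('a \<Rightarrow> 'b::real_normed_vector) \<Rightarrow> bool" where
  "Cinf_on S F \<longleftrightarrow> open S \<and>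
     (\<forall>ds. set ds \<subseteq> Basis \<longrightarrow>
        continuous_on S (iter_pd ds F) \<and>
        (\<forall>w\<in>S. \<forall>b\<in>Basis. (\<lambda>t. iter_pd ds F (w + t *\<^sub>R b)) differentiable (at 0)))"

text \<open>Maps of finitely many shifts of a sequence are modelled as maps on sequences
  (int \<Rightarrow> 'a) (with the product topology) that depend only on finitely many indices.\<close>
fun iter_pd_seq :: "(int \<times> 'a::euclidean_space) list \<Rightarrow> ((int \<Rightarrow> 'a) \<Rightarrow> 'b::real_normed_vector)
                     \<Rightarrow> (int \<Rightarrow> 'a) \<Rightarrow> 'b" where
  "iter_pd_seq [] F = F"
| "iter_pd_seq (d # ds) F =
     (\<lambda>w. vector_derivative (\<lambda>t. iter_pd_seq ds F (w(fst d := w (fst d) + t *\<^sub>R snd d))) (at 0))"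

definition Cinf_seq_on :: "(int \<Rightarrow> 'a::euclidean_space) set \<Rightarrow> ((int \<Rightarrow> 'a) \<Rightarrow> 'b::real_normed_vector) \<Rightarrow> bool" where
  "Cinf_seq_on S F \<longleftrightarrow> open S \<and>
     (\<forall>ds. (\<forall>d\<in>set ds. snd d \<in> Basis) \<longrightarrow>
        continuous_on S (iter_pd_seq ds F) \<and>
        (\<forall>w\<in>S. \<forall>i. \<forall>b\<in>Basis. (\<lambda>t. iter_pd_seq ds F (w(i := w i + t *\<^sub>R b))) differentiable (at 0)))"

definition depends_only :: "'i set \<Rightarrow> (('i \<Rightarrow> 'a) \<Rightarrow> 'b) \<Rightarrow> bool" where
  "depends_only I F \<longleftrightarrow> (\<forall>w w'. (\<forall>i\<in>I. w i = w' i) \<longrightarrow> F w = F w')"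

definition is_traj :: "('x \<Rightarrow> 'u \<Rightarrow> 'x) \<Rightarrow> (int \<Rightarrow> 'x) \<Rightarrow> (int \<Rightarrow> 'u) \<Rightarrow> bool" where
  "is_traj f x u \<longleftrightarrow> (\<forall>k. x (k + 1) = f (x k) (u k))"

text \<open>The coordinates (..., zeta[-2], zeta[-1], (x,u), u[1], u[2], ...) of a trajectory at time k,
  packed as a sequence indexed by the shift i: at i = 0 the pair (x(k),u(k)); at i < 0 the
  value zeta(k+i) = g(x(k+i),u(k+i)); at i > 0 the value u(k+i) (state slot unused = 0).\<close>
definition traj_coords :: "('x::zero \<Rightarrow> 'u \<Rightarrow> 'u) \<Rightarrow> (int \<Rightarrow> 'x) \<Rightarrow> (int \<Rightarrow> 'u) \<Rightarrow> int \<Rightarrow> int \<Rightarrow> 'x \<times> 'u" where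
  "traj_coords g x u k = (\<lambda>i. (if i = 0 then x k else 0,
                               if i < 0 then g (x (k + i)) (u (k + i)) else u (k + i)))"

text \<open>Flat output phi (a smooth map of finitely many of the above coordinates) with
  parametrisation x = F_x(y[-r1 .. r2-1]), u = F_u(y[-r1 .. r2]), establishing locally
  (near the equilibrium (x0,u0)) a one-to-one correspondence between trajectories and
  sequences y.\<close>
definition flat_output_win ::
  "('x::euclidean_space \<Rightarrow> 'u::euclidean_space \<Rightarrow> 'x) \<Rightarrow> ('x \<Rightarrow> 'u \<Rightarrow> 'u) \<Rightarrow> 'x \<Rightarrow> 'u
   \<Rightarrow> ((int \<Rightarrow> 'x \<times> 'u) \<Rightarrow> 'u) \<Rightarrow> nat \<Rightarrow> nat \<Rightarrow> bool" where
  "flat_output_win f g x0 u0 \<phi> r1 r2 \<longleftrightarrow>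
     (let c0 = traj_coords g (\<lambda>_. x0) (\<lambda>_. u0) 0; y0 = \<phi> c0 in
      (\<exists>q1 q2 :: nat. depends_only {- int q1 .. int q2} \<phi>) \<and>
      (\<exists>S. c0 \<in> S \<and> Cinf_seq_on S \<phi>) \<and>
      (\<exists>Fx Fu. depends_only {- int r1 .. int r2 - 1} Fx \<and> depends_only {- int r1 .. int r2} Fu \<and>
         (\<exists>T. (\<lambda>_. y0) \<in> T \<and> Cinf_seq_on T Fx \<and> Cinf_seq_on T Fu) \<and>
         (\<exists>N W. open N \<and> (x0, u0) \<in> N \<and> open W \<and> y0 \<in> W \<and>
            (\<forall>x u. is_traj f x u \<and> (\<forall>k. (x k, u k) \<in> N) \<longrightarrow>
               (\<forall>k. x k = Fx (\<lambda>i. \<phi> (traj_coords g x u (k + i))) \<and>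
                    u k = Fu (\<lambda>i. \<phi> (traj_coords g x u (k + i))))) \<and>
            (\<forall>y. (\<forall>k. y k \<in> W) \<longrightarrow>
               (let x = (\<lambda>k. Fx (\<lambda>i. y (k + i))); u = (\<lambda>k. Fu (\<lambda>i. y (k + i))) in
                  is_traj f x u \<and> (\<forall>k. y k = \<phi> (traj_coords g x u k)))))))"

definition flat_output where
  "flat_output f g x0 u0 \<phi> \<longleftrightarrow> (\<exists>r1 r2. flat_output_win f g x0 u0 \<phi> r1 r2)"

text \<open>Forward-flat output: no backward shifts of zeta in phi and R1 = 0.\<close>
definition forward_flat_output where
  "forward_flat_output f g x0 u0 \<phi> \<longleftrightarrow>
     depends_only {i. 0 \<le> i} \<phi> \<and> (\<exists>r2. flat_output_win f g x0 u0 \<phi> 0 r2)"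

text \<open>Backward-flat output: no forward shifts of u in phi and R2 = 0.\<close>
definition backward_flat_output where
  "backward_flat_output f g x0 u0 \<phi> \<longleftrightarrow>
     depends_only {i. i \<le> 0} \<phi> \<and> (\<exists>r1. flat_output_win f g x0 u0 \<phi> r1 0)"

definition local_diffeo_inv :: "('a::euclidean_space \<Rightarrow> 'b::euclidean_space) \<Rightarrow> ('b \<Rightarrow> 'a) \<Rightarrow> 'a \<Rightarrow> bool" where
  "local_diffeo_inv F G p \<longleftrightarrow>
     (\<exists>N. open N \<and> p \<in> N \<and> open (F ` N) \<and> (\<forall>a\<in>N. G (F a) = a) \<and>
          Cinf_on N F \<and> Cinf_on (F ` N) G)"

text \<open>Output of the associated system obtained from phi by substituting
  x := psi_x(z,v), u := psi_u(z,v), zeta[-j] := v[j], u[j] := eta[-j].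
  In the coordinates of the associated system (z at index 0 together with v, eta[i] at i<0,
  v[i] at i>0) this is the following map.\<close>
definition assoc_output :: "('x::zero \<Rightarrow> 'u \<Rightarrow> 'x) \<Rightarrow> ('x \<Rightarrow> 'u \<Rightarrow> 'u)
    \<Rightarrow> ((int \<Rightarrow> 'x \<times> 'u) \<Rightarrow> 'u) \<Rightarrow> ((int \<Rightarrow> 'x \<times> 'u) \<Rightarrow> 'u)" where
  "assoc_output \<psi>x \<psi>u \<phi> = (\<lambda>c. \<phi> (\<lambda>i. if i = 0
        then (\<psi>x (fst (c 0)) (snd (c 0)), \<psi>u (fst (c 0)) (snd (c 0)))
        else (0, snd (c (- i)))))"

end

theory Submission
  imports Defs
begin

definition pd :: "int \<times> 'a::euclidean_space \<Rightarrow> ((int \<Rightarrow> 'a) \<Rightarrow> 'b::real_normed_vector) \<Rightarrow> (int \<Rightarrow> 'a) \<Rightarrow> 'b" where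
  "pd d F = iter_pd_seq [d] F"

lemma pd_eq: "pd d F w = vector_derivative (\<lambda>t. F (w(fst d := w (fst d) + t *\<^sub>R snd d))) (at 0)"
  by (simp add: pd_def)

lemma iter_snoc: "iter_pd_seq (ds @ [d]) F = iter_pd_seq ds (pd d F)"
  by (induction ds) (simp_all add: pd_def)

lemma open_fun_ball:
  fixes U :: "('i \<Rightarrow> 'a::metric_space) set"
  assumes "open U" "c \<in> U"
  shows "\<exists>\<eta>>0. \<forall>p. (\<forall>i. dist (p i) (c i) < \<eta>) \<longrightarrow> p \<in> U"
proof -
  obtain X where X: "c \<in> (\<Pi>\<^sub>E i\<in>UNIV. X i)" "\<forall>i. openin euclidean (X i)"
     "finite {i. X i \<noteq> topspace euclidean}" "(\<Pi>\<^sub>E i\<in>UNIV. X i) \<subseteq> U"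
    using product_topology_open_contains_basis[of "\<lambda>i. euclidean" UNIV U c] assms
    unfolding open_fun_def by auto
  define K where "K = {i. X i \<noteq> UNIV}"
  have K: "finite K" using X(3) by (simp add: K_def)
  have "\<forall>i. \<exists>e>0. ball (c i) e \<subseteq> X i"
    using X(1,2) by (metis PiE_iff UNIV_I open_contains_ball open_openin)
  then obtain e where e: "\<And>i. e i > 0" "\<And>i. ball (c i) (e i) \<subseteq> X i" by metis
  define \<eta> where "\<eta> = (if K = {} then 1 else Min (e ` K))"
  have "\<eta> > 0" using K e(1) by (auto simp: \<eta>_def)
  moreover have "p \<in> U" if "\<forall>i. dist (p i) (c i) < \<eta>" for p
  proof -
    have "p i \<in> X i" for i
    proof (cases "i \<in> K")
      case True
      then have "\<eta> \<le> e i" using K by (auto simp: \<eta>_def)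
      then have "dist (c i) (p i) < e i" using that by (simp add: dist_commute) (meson less_le_trans)
      then show ?thesis using e(2)[of i] by auto
    next
      case False then show ?thesis by (auto simp: K_def)
    qed
    then show ?thesis using X(4) by auto
  qed
  ultimately show ?thesis by blast
qed

lemma ev_upd_in:
  fixes w :: "int \<Rightarrow> 'a::real_normed_vector"
  assumes "open T" "w \<in> T"
  shows "eventually (\<lambda>t::real. w(i := w i + t *\<^sub>R b) \<in> T) (nhds 0)"
proof -
  have c: "continuous_on UNIV (\<lambda>t::real. w(i := w i + t *\<^sub>R b))"
  proof (rule continuous_on_coordinatewise_then_product)
    fix j show "continuous_on UNIV (\<lambda>t::real. (w(i := w i + t *\<^sub>R b)) j)"
      by (cases "j = i") (auto intro!: continuous_intros)
  qed
  have "open ((\<lambda>t::real. w(i := w i + t *\<^sub>R b)) -` T)"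
    by (rule open_vimage[OF assms(1) c])
  then have "open {t. w(i := w i + t *\<^sub>R b) \<in> T}" by (simp add: vimage_def)
  moreover have "0 \<in> {t. w(i := w i + t *\<^sub>R b) \<in> T}" using assms(2) by simp
  ultimately show ?thesis using eventually_nhds by blast
qed

lemma iter_local:
  assumes "open T" "\<And>w. w \<in> T \<Longrightarrow> F w = F' w" "w \<in> T"
  shows "iter_pd_seq ds F w = iter_pd_seq ds F' w"
  using assms(3)
proof (induction ds arbitrary: w)
  case Nil then show ?case using assms(2) by simp
next
  case (Cons d ds)
  have "eventually (\<lambda>t. t \<in> UNIV \<longrightarrow> iter_pd_seq ds F (w(fst d := w (fst d) + t *\<^sub>R snd d)) =
          iter_pd_seq ds F' (w(fst d := w (fst d) + t *\<^sub>R snd d))) (nhds 0)"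
    using ev_upd_in[OF assms(1) Cons.prems, of "fst d" "snd d"] by eventually_elim (use Cons.IH in auto)
  then show ?case by (simp add: vector_derivative_cong_eq)
qed

lemma differentiable_local:
  fixes f g :: "real \<Rightarrow> 'b::real_normed_vector"
  assumes "eventually (\<lambda>t. f t = g t) (nhds 0)" "f differentiable (at 0)"
  shows "g differentiable (at 0)"
proof -
  have "(f has_vector_derivative vector_derivative f (at 0)) (at 0)"
    using assms(2) vector_derivative_works by blast
  moreover have "f 0 = g 0" using assms(1) eventually_nhds_x_imp_x by blast
  ultimately have "(g has_vector_derivative vector_derivative f (at 0)) (at 0)"
    using has_vector_derivative_cong_ev[where S=UNIV and x=0 and f=f and g=g] assms(1) by auto
  then show ?thesis using differentiableI_vector by blast
qed

definition sm :: "nat \<Rightarrow> (int \<Rightarrow> 'a::euclidean_space) set \<Rightarrow> ((int \<Rightarrow> 'a) \<Rightarrow> 'b::real_normed_vector) \<Rightarrow> bool" where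
  "sm n T F \<longleftrightarrow> open T \<and> (\<forall>ds. length ds \<le> n \<longrightarrow> (\<forall>d\<in>set ds. snd d \<in> Basis) \<longrightarrow>
     continuous_on T (iter_pd_seq ds F) \<and>
     (\<forall>w\<in>T. \<forall>i. \<forall>b\<in>Basis. (\<lambda>t. iter_pd_seq ds F (w(i := w i + t *\<^sub>R b))) differentiable (at 0)))"

lemma smI:
  assumes "open T"
    "\<And>ds. length ds \<le> n \<Longrightarrow> (\<forall>d\<in>set ds. snd d \<in> Basis) \<Longrightarrow> continuous_on T (iter_pd_seq ds F)"
    "\<And>ds w i b. length ds \<le> n \<Longrightarrow> (\<forall>d\<in>set ds. snd d \<in> Basis) \<Longrightarrow> w \<in> T \<Longrightarrow> b \<in> Basis \<Longrightarrow>
       (\<lambda>t. iter_pd_seq ds F (w(i := w i + t *\<^sub>R b))) differentiable (at 0)"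
  shows "sm n T F"
  using assms unfolding sm_def by blast

lemma smD:
  assumes "sm n T F" "length ds \<le> n" "\<forall>d\<in>set ds. snd d \<in> Basis"
  shows "open T" "continuous_on T (iter_pd_seq ds F)"
    "\<And>w i b. w \<in> T \<Longrightarrow> b \<in> Basis \<Longrightarrow> (\<lambda>t. iter_pd_seq ds F (w(i := w i + t *\<^sub>R b))) differentiable (at 0)"
  using assms unfolding sm_def by blast+

lemma Cinf_sm: "Cinf_seq_on T F \<longleftrightarrow> (\<forall>n. sm n T F)"
proof
  assume a: "Cinf_seq_on T F"
  show "\<forall>n. sm n T F"
  proof
    fix n show "sm n T F"
    proof (rule smI)
      show "open T" using a by (simp add: Cinf_seq_on_def)
      fix ds :: "(int \<times> 'a) list" assume b: "\<forall>d\<in>set ds. snd d \<in> Basis"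
      show "continuous_on T (iter_pd_seq ds F)" using a b unfolding Cinf_seq_on_def by blast
      show "(\<lambda>t. iter_pd_seq ds F (w(i := w i + t *\<^sub>R c))) differentiable at 0"
        if "w \<in> T" "c \<in> Basis" for w i c using a b that unfolding Cinf_seq_on_def by blast
    qed
  qed
next
  assume a: "\<forall>n. sm n T F"
  show "Cinf_seq_on T F" unfolding Cinf_seq_on_def
  proof (intro conjI allI impI)
    show "open T" using a smD(1)[of 0 T F "[]"] by simp
    fix ds :: "(int \<times> 'a) list" assume b: "\<forall>d\<in>set ds. snd d \<in> Basis"
    have s: "sm (length ds) T F" using a by blast
    show "continuous_on T (iter_pd_seq ds F)" using smD(2)[OF s _ b] by simp
    show "\<forall>w\<in>T. \<forall>i. \<forall>b\<in>Basis. (\<lambda>t. iter_pd_seq ds F (w(i := w i + t *\<^sub>R b))) differentiable at 0"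
      using smD(3)[OF s _ b] by simp
  qed
qed

lemma sm0: "sm 0 T F \<longleftrightarrow> open T \<and> continuous_on T F \<and>
   (\<forall>w\<in>T. \<forall>i. \<forall>b\<in>Basis. (\<lambda>t. F (w(i := w i + t *\<^sub>R b))) differentiable (at 0))"
proof
  assume a: "sm 0 T F"
  show "open T \<and> continuous_on T F \<and>
   (\<forall>w\<in>T. \<forall>i. \<forall>b\<in>Basis. (\<lambda>t. F (w(i := w i + t *\<^sub>R b))) differentiable (at 0))"
    using smD[OF a, of "[]"] by simp
next
  assume a: "open T \<and> continuous_on T F \<and>
   (\<forall>w\<in>T. \<forall>i. \<forall>b\<in>Basis. (\<lambda>t. F (w(i := w i + t *\<^sub>R b))) differentiable (at 0))"
  show "sm 0 T F"
  proof (rule smI)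
    show "open T" using a by simp
    fix ds :: "(int \<times> 'a) list" assume l: "length ds \<le> 0"
    then have "ds = []" by simp
    then show "continuous_on T (iter_pd_seq ds F)" using a by simp
    show "(\<lambda>t. iter_pd_seq ds F (w(i := w i + t *\<^sub>R c))) differentiable at 0"
      if "w \<in> T" "c \<in> Basis" for w i c using a that \<open>ds = []\<close> by simp
  qed
qed

lemma sm_mono:
  assumes "sm n T F" "m \<le> n" shows "sm m T F"
proof (rule smI)
  show "open T" using smD(1)[OF assms(1), of "[]"] by simp
  fix ds :: "(int \<times> 'a) list" assume l: "length ds \<le> m" and b: "\<forall>d\<in>set ds. snd d \<in> Basis"
  have l': "length ds \<le> n" using l assms(2) by simp
  show "continuous_on T (iter_pd_seq ds F)" using smD(2)[OF assms(1) l' b] .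
  show "(\<lambda>t. iter_pd_seq ds F (w(i := w i + t *\<^sub>R c))) differentiable at 0"
    if "w \<in> T" "c \<in> Basis" for w i c using smD(3)[OF assms(1) l' b that] .
qed

lemma sm_open: "sm n T F \<Longrightarrow> open T" unfolding sm_def by blast

lemma sm_Suc: "sm (Suc n) T F \<longleftrightarrow> sm 0 T F \<and> (\<forall>i. \<forall>b\<in>Basis. sm n T (pd (i,b) F))"
proof
  assume a: "sm (Suc n) T F"
  have "sm n T (pd (i,b) F)" if "b \<in> Basis" for i b
  proof (rule smI)
    show "open T" using a by (simp add: sm_def)
    fix ds :: "(int \<times> 'a) list" assume "length ds \<le> n" "\<forall>d\<in>set ds. snd d \<in> Basis"
    then have l: "length (ds @ [(i,b)]) \<le> Suc n" "\<forall>d\<in>set (ds @ [(i,b)]). snd d \<in> Basis" using that by auto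
    show "continuous_on T (iter_pd_seq ds (pd (i, b) F))"
      using smD(2)[OF a l] by (simp add: iter_snoc)
    show "(\<lambda>t. iter_pd_seq ds (pd (i, b) F) (w(j := w j + t *\<^sub>R c))) differentiable at 0"
      if "w \<in> T" "c \<in> Basis" for w j c
      using smD(3)[OF a l that] by (simp add: iter_snoc)
  qed
  then show "sm 0 T F \<and> (\<forall>i. \<forall>b\<in>Basis. sm n T (pd (i,b) F))" using a sm_mono by blast
next
  assume a: "sm 0 T F \<and> (\<forall>i. \<forall>b\<in>Basis. sm n T (pd (i,b) F))"
  show "sm (Suc n) T F"
  proof (rule smI)
    show "open T" using a by (simp add: sm_def)
    fix ds :: "(int \<times> 'a) list" assume l: "length ds \<le> Suc n" and b: "\<forall>d\<in>set ds. snd d \<in> Basis"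
    have "continuous_on T (iter_pd_seq ds F) \<and>
        (\<forall>w\<in>T. \<forall>ia. \<forall>ba\<in>Basis. (\<lambda>t. iter_pd_seq ds F (w(ia := w ia + t *\<^sub>R ba))) differentiable at 0)"
    proof (cases ds rule: rev_exhaust)
      case Nil then show ?thesis using a by (simp add: sm0)
    next
      case (snoc ds' d)
      obtain i b' where d: "d = (i, b')" by fastforce
      have bb: "b' \<in> Basis" "length ds' \<le> n" "\<forall>d\<in>set ds'. snd d \<in> Basis" using b l snoc d by auto
      have s: "sm n T (pd (i,b') F)" using a bb(1) by blast
      show ?thesis unfolding snoc d iter_snoc using smD(2,3)[OF s bb(2,3)] by blast
    qed
    then show "continuous_on T (iter_pd_seq ds F)"
      "\<And>w i b. w \<in> T \<Longrightarrow> b \<in> Basis \<Longrightarrow> (\<lambda>t. iter_pd_seq ds F (w(i := w i + t *\<^sub>R b))) differentiable (at 0)"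
      by blast+
  qed
qed

lemma sm_local:
  assumes "sm n T F" "\<And>w. w \<in> T \<Longrightarrow> F w = F' w"
  shows "sm n T F'"
proof (rule smI)
  have o: "open T" using assms by (simp add: sm_def)
  then show "open T" .
  fix ds :: "(int \<times> 'a) list" assume l: "length ds \<le> n" and b: "\<forall>d\<in>set ds. snd d \<in> Basis"
  have e: "\<And>w. w \<in> T \<Longrightarrow> iter_pd_seq ds F w = iter_pd_seq ds F' w"
    using iter_local[of T F F'] o assms(2) by blast
  have "continuous_on T (iter_pd_seq ds F)" using smD(2)[OF assms(1) l b] .
  then show "continuous_on T (iter_pd_seq ds F')" using e continuous_on_cong by blast
  show "(\<lambda>t. iter_pd_seq ds F' (w(i := w i + t *\<^sub>R c))) differentiable at 0"
    if "w \<in> T" "c \<in> Basis" for w i c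
  proof (rule differentiable_local)
    show "(\<lambda>t. iter_pd_seq ds F (w(i := w i + t *\<^sub>R c))) differentiable at 0"
      using smD(3)[OF assms(1) l b that] .
    show "\<forall>\<^sub>F t in nhds 0. iter_pd_seq ds F (w(i := w i + t *\<^sub>R c)) = iter_pd_seq ds F' (w(i := w i + t *\<^sub>R c))"
      using ev_upd_in[OF o that(1), of i c] by eventually_elim (use e in auto)
  qed
qed

lemma pd_has:
  assumes "(\<lambda>t. F (w(i := w i + t *\<^sub>R b))) differentiable (at 0)"
  shows "((\<lambda>t. F (w(i := w i + t *\<^sub>R b))) has_vector_derivative pd (i,b) F w) (at 0)"
  using assms vector_derivative_works by (simp add: pd_eq) blast

lemma pd_eqI:
  assumes "((\<lambda>t. F (w(i := w i + t *\<^sub>R b))) has_vector_derivative D) (at 0)"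
  shows "pd (i,b) F w = D"
  using vector_derivative_at[OF assms] by (simp add: pd_eq)

lemma linear_differentiable:
  assumes "bounded_linear L" "(f::real \<Rightarrow> 'b::real_normed_vector) differentiable (at 0)"
  shows "(\<lambda>t. L (f t)) differentiable (at 0)"
  using bounded_linear.has_vector_derivative[OF assms(1)] assms(2) vector_derivative_works
    differentiableI_vector by blast

lemma sm_const:
  fixes T :: "(int \<Rightarrow> 'a::euclidean_space) set" and c :: "'b::real_normed_vector"
  shows "open T \<Longrightarrow> sm n T (\<lambda>_. c)"
proof (induction n arbitrary: c)
  case 0 then show ?case by (simp add: sm0)
next
  case (Suc n)
  have "pd (i,b) (\<lambda>_::int \<Rightarrow> 'a. c) = (\<lambda>_. 0)" for i b
    by (rule ext) (simp add: pd_eq vector_derivative_at[OF has_vector_derivative_const])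
  then have "sm n T (pd (i,b) (\<lambda>_::int \<Rightarrow> 'a. c))" for i b using Suc by simp
  then show ?case using Suc.prems by (simp add: sm_Suc sm0)
qed

lemma sm_add:
  assumes "sm n T F" "sm n T G"
  shows "sm n T (\<lambda>w. F w + G w)"
  using assms
proof (induction n arbitrary: F G)
  case 0 then show ?case by (auto simp: sm0 intro!: continuous_intros)
next
  case (Suc n)
  have o: "open T" using Suc.prems sm_open by blast
  have "sm n T (pd (i,b) (\<lambda>w. F w + G w))" if b: "b \<in> Basis" for i b
  proof (rule sm_local)
    show "sm n T (\<lambda>w. pd (i,b) F w + pd (i,b) G w)"
      using Suc.IH Suc.prems b by (simp add: sm_Suc)
    fix w assume w: "w \<in> T"
    have dF: "(\<lambda>t. F (w(i := w i + t *\<^sub>R b))) differentiable (at 0)"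
      using Suc.prems(1) w b by (simp add: sm_Suc sm0)
    have dG: "(\<lambda>t. G (w(i := w i + t *\<^sub>R b))) differentiable (at 0)"
      using Suc.prems(2) w b by (simp add: sm_Suc sm0)
    show "pd (i, b) F w + pd (i, b) G w = pd (i, b) (\<lambda>w. F w + G w) w"
      by (rule pd_eqI[symmetric]) (rule has_vector_derivative_add[OF pd_has[OF dF] pd_has[OF dG]])
  qed
  moreover have "sm 0 T (\<lambda>w. F w + G w)"
    using Suc.prems by (auto simp: sm_Suc sm0 intro!: continuous_intros)
  ultimately show ?case by (simp add: sm_Suc)
qed

lemma sm_linear:
  assumes L: "bounded_linear L" and "sm n T F"
  shows "sm n T (\<lambda>w. L (F w))"
  using assms(2)
proof (induction n arbitrary: F)
  case 0 then show ?case
    by (auto simp: sm0 intro!: continuous_intros bounded_linear.continuous_on[OF L]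
       linear_differentiable[OF L])
next
  case (Suc n)
  have "sm n T (pd (i,b) (\<lambda>w. L (F w)))" if b: "b \<in> Basis" for i b
  proof (rule sm_local)
    show "sm n T (\<lambda>w. L (pd (i,b) F w))"
      using Suc.IH Suc.prems b by (simp add: sm_Suc)
    fix w assume w: "w \<in> T"
    have dF: "(\<lambda>t. F (w(i := w i + t *\<^sub>R b))) differentiable (at 0)"
      using Suc.prems(1) w b by (simp add: sm_Suc sm0)
    show "L (pd (i, b) F w) = pd (i, b) (\<lambda>w. L (F w)) w"
      by (rule pd_eqI[symmetric]) (rule bounded_linear.has_vector_derivative[OF L pd_has[OF dF]])
  qed
  moreover have "sm 0 T (\<lambda>w. L (F w))"
    using Suc.prems by (auto simp: sm_Suc sm0 intro!: continuous_intros bounded_linear.continuous_on[OF L]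
       linear_differentiable[OF L])
  ultimately show ?case by (simp add: sm_Suc)
qed

lemma sm_scaleR:
  fixes a :: "(int \<Rightarrow> 'a::euclidean_space) \<Rightarrow> real"
  assumes "sm n T a" "sm n T F"
  shows "sm n T (\<lambda>w. a w *\<^sub>R F w)"
  using assms
proof (induction n arbitrary: a F)
  case 0 then show ?case
    by (auto simp: sm0 intro!: continuous_intros differentiable_scaleR)
next
  case (Suc n)
  have "sm n T (pd (i,b) (\<lambda>w. a w *\<^sub>R F w))" if b: "b \<in> Basis" for i b
  proof (rule sm_local)
    have "sm n T a" "sm n T F" using Suc.prems sm_mono[of "Suc n" T _ n] by auto
    then show "sm n T (\<lambda>w. a w *\<^sub>R pd (i,b) F w + pd (i,b) a w *\<^sub>R F w)"
      using Suc.IH Suc.prems b by (intro sm_add) (simp_all add: sm_Suc)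
    fix w assume w: "w \<in> T"
    have dF: "(\<lambda>t. F (w(i := w i + t *\<^sub>R b))) differentiable (at 0)"
      using Suc.prems(2) w b by (simp add: sm_Suc sm0)
    have da: "(\<lambda>t. a (w(i := w i + t *\<^sub>R b))) differentiable (at 0)"
      using Suc.prems(1) w b by (simp add: sm_Suc sm0)
    have da': "((\<lambda>t. a (w(i := w i + t *\<^sub>R b))) has_field_derivative pd (i,b) a w) (at 0)"
      using pd_has[OF da] unfolding has_real_derivative_iff_has_vector_derivative .
    show "a w *\<^sub>R pd (i,b) F w + pd (i,b) a w *\<^sub>R F w = pd (i, b) (\<lambda>w. a w *\<^sub>R F w) w"
    proof -
      have e0: "w(i := w i + 0 *\<^sub>R b) = w" by simp
      note h = has_vector_derivative_scaleR[OF da' pd_has[OF dF]]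
      show ?thesis using h unfolding e0 by (rule pd_eqI[symmetric])
    qed
  qed
  moreover have "sm 0 T (\<lambda>w. a w *\<^sub>R F w)"
    using Suc.prems by (auto simp: sm_Suc sm0 intro!: continuous_intros differentiable_scaleR)
  ultimately show ?case by (simp add: sm_Suc)
qed

lemma sm_sum:
  fixes T :: "(int \<Rightarrow> 'a::euclidean_space) set" and F :: "'i \<Rightarrow> (int \<Rightarrow> 'a) \<Rightarrow> 'b::real_normed_vector"
  assumes "finite A" "open T" "\<And>x. x \<in> A \<Longrightarrow> sm n T (F x)"
  shows "sm n T (\<lambda>w. \<Sum>x\<in>A. F x w)"
  using assms(1,3)
proof (induction A rule: finite_induct)
  case empty then show ?case using sm_const[OF assms(2)] by simp
next
  case (insert x A)
  then show ?case using sm_add[of n T "F x" "\<lambda>w. \<Sum>x\<in>A. F x w"] by simp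
qed

lemma sm_subset:
  assumes "sm n T F" "open T'" "T' \<subseteq> T"
  shows "sm n T' F"
proof (rule smI)
  show "open T'" by fact
  fix ds :: "(int \<times> 'a) list" assume l: "length ds \<le> n" and b: "\<forall>d\<in>set ds. snd d \<in> Basis"
  show "continuous_on T' (iter_pd_seq ds F)" using smD(2)[OF assms(1) l b] continuous_on_subset assms(3) by blast
  show "(\<lambda>t. iter_pd_seq ds F (w(i := w i + t *\<^sub>R c))) differentiable at 0"
    if "w \<in> T'" "c \<in> Basis" for w i c using smD(3)[OF assms(1) l b] that assms(3) by blast
qed

lemma Cinf_subset: "Cinf_seq_on T F \<Longrightarrow> open T' \<Longrightarrow> T' \<subseteq> T \<Longrightarrow> Cinf_seq_on T' F"
  using sm_subset by (metis Cinf_sm)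

lemma Cinf_local: "Cinf_seq_on T F \<Longrightarrow> (\<And>w. w \<in> T \<Longrightarrow> F w = F' w) \<Longrightarrow> Cinf_seq_on T F'"
  using sm_local by (metis Cinf_sm)

lemma Cinf_pd: "Cinf_seq_on T F \<Longrightarrow> b \<in> Basis \<Longrightarrow> Cinf_seq_on T (pd (i,b) F)"
proof -
  assume a: "Cinf_seq_on T F" "b \<in> Basis"
  have "sm n T (pd (i,b) F)" for n using a(1) a(2) sm_Suc[of n T F] unfolding Cinf_sm by blast
  then show ?thesis by (simp add: Cinf_sm)
qed

lemma Cinf_open: "Cinf_seq_on T F \<Longrightarrow> open T" by (simp add: Cinf_seq_on_def)

lemma Cinf_cont: "Cinf_seq_on T F \<Longrightarrow> continuous_on T F"
  unfolding Cinf_seq_on_def by (metis empty_iff empty_set iter_pd_seq.simps(1))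

lemma Cinf_diff: "Cinf_seq_on T F \<Longrightarrow> w \<in> T \<Longrightarrow> b \<in> Basis \<Longrightarrow>
   (\<lambda>t. F (w(i := w i + t *\<^sub>R b))) differentiable (at 0)"
  unfolding Cinf_seq_on_def by (metis empty_iff empty_set iter_pd_seq.simps(1))

lemma depends_only_pd:
  assumes "depends_only I F" shows "depends_only I (pd d F)"
  unfolding depends_only_def
proof (intro allI impI)
  fix w w' :: "int \<Rightarrow> 'a" assume a: "\<forall>i\<in>I. w i = w' i"
  have "(\<lambda>t. F (w(fst d := w (fst d) + t *\<^sub>R snd d))) = (\<lambda>t. F (w'(fst d := w' (fst d) + t *\<^sub>R snd d)))"
  proof
    fix t
    have "\<forall>i\<in>I. (w(fst d := w (fst d) + t *\<^sub>R snd d)) i = (w'(fst d := w' (fst d) + t *\<^sub>R snd d)) i"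
      using a by auto
    then show "F (w(fst d := w (fst d) + t *\<^sub>R snd d)) = F (w'(fst d := w' (fst d) + t *\<^sub>R snd d))"
      using assms unfolding depends_only_def by blast
  qed
  then show "pd d F w = pd d F w'" by (simp add: pd_eq)
qed

lemma vd_shift:
  fixes F :: "real \<Rightarrow> 'b::real_normed_vector"
  assumes "((\<lambda>s'. F (s + s')) has_vector_derivative D) (at 0)"
  shows "(F has_vector_derivative D) (at s)"
proof -
  have f: "((\<lambda>\<sigma>. \<sigma> - s) has_vector_derivative 1) (at s)" by (auto intro!: derivative_eq_intros)
  have g: "((\<lambda>s'. F (s + s')) has_vector_derivative D) (at ((\<lambda>\<sigma>. \<sigma> - s) s))" using assms by simp
  have "((\<lambda>s'. F (s + s')) \<circ> (\<lambda>\<sigma>. \<sigma> - s)) = F" by (rule ext) simp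
  then show ?thesis using vector_diff_chain_at[OF f g] by simp
qed

definition PP :: "(int \<Rightarrow> 'a::real_vector) \<Rightarrow> (int \<times> 'a) set \<Rightarrow> (int \<times> 'a \<Rightarrow> real \<Rightarrow> real) \<Rightarrow> real \<Rightarrow> int \<Rightarrow> 'a" where
  "PP c D h t = (\<lambda>i. c i + (\<Sum>d\<in>D. if fst d = i then h d t *\<^sub>R snd d else 0))"

lemma PP_insert:
  assumes "finite D" "d \<notin> D"
  shows "PP c (insert d D) h t = (PP c D h t)(fst d := PP c D h t (fst d) + h d t *\<^sub>R snd d)"
proof (rule ext)
  fix i show "PP c (insert d D) h t i = ((PP c D h t)(fst d := PP c D h t (fst d) + h d t *\<^sub>R snd d)) i"
  proof -
    have e: "PP c (insert d D) h t i = (if fst d = i then h d t *\<^sub>R snd d else 0) + PP c D h t i"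
      unfolding PP_def using assms by (simp add: sum.insert add.left_commute)
    show ?thesis unfolding e by (cases "i = fst d") (simp_all add: add.commute)
  qed
qed

lemma PP_0: "\<forall>d\<in>D. h d 0 = 0 \<Longrightarrow> PP c D h 0 = c"
  by (rule ext) (auto simp: PP_def intro!: sum.neutral)

lemma PP_empty: "PP c {} h t = c"
  by (rule ext) (simp add: PP_def)

lemma PP_dist:
  fixes c :: "int \<Rightarrow> 'a::euclidean_space"
  assumes "finite D" "D \<subseteq> UNIV \<times> Basis"
  shows "norm (PP c D h t i - c i) \<le> (\<Sum>d\<in>D. \<bar>h d t\<bar>)"
proof -
  have "norm (PP c D h t i - c i) = norm (\<Sum>d\<in>D. if fst d = i then h d t *\<^sub>R snd d else 0)"
    by (simp add: PP_def)
  also have "\<dots> \<le> (\<Sum>d\<in>D. norm (if fst d = i then h d t *\<^sub>R snd d else 0))"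
    by (rule norm_sum)
  also have "\<dots> \<le> (\<Sum>d\<in>D. \<bar>h d t\<bar>)"
  proof (rule sum_mono)
    fix d assume "d \<in> D"
    then have "norm (snd d) = 1" using assms(2) by auto
    then show "norm (if fst d = i then h d t *\<^sub>R snd d else 0) \<le> \<bar>h d t\<bar>" by auto
  qed
  finally show ?thesis .
qed

lemma CLD:
  fixes G :: "(int \<Rightarrow> 'a::euclidean_space) \<Rightarrow> 'c::real_normed_vector"
  assumes S: "open S" "c \<in> S"
    and hG: "\<And>p i b. p \<in> S \<Longrightarrow> b \<in> Basis \<Longrightarrow>
        ((\<lambda>s. G (p(i := p i + s *\<^sub>R b))) has_vector_derivative pd (i,b) G p) (at 0)"
    and hc: "\<And>i b. b \<in> Basis \<Longrightarrow> continuous_on S (pd (i,b) G)"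
  shows "finite D \<Longrightarrow> D \<subseteq> UNIV \<times> Basis \<Longrightarrow>
     (\<forall>d\<in>D. (h d has_real_derivative h' d) (at 0) \<and> h d 0 = 0) \<Longrightarrow>
     ((\<lambda>t. G (PP c D h t)) has_vector_derivative (\<Sum>d\<in>D. h' d *\<^sub>R pd d G c)) (at 0)"
proof (induction D rule: finite_induct)
  case empty
  then show ?case by (simp add: PP_empty)
next
  case (insert d D)
  obtain j b where d: "d = (j,b)" by fastforce
  have b: "b \<in> Basis" using insert.prems d by auto
  have IH: "((\<lambda>t. G (PP c D h t)) has_vector_derivative (\<Sum>d\<in>D. h' d *\<^sub>R pd d G c)) (at 0)"
    using insert by auto
  define q where "q t = PP c D h t" for t
  define A where "A t = G ((q t)(j := q t j + h d t *\<^sub>R b)) - G (q t)" for t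
  have hd: "(h d has_real_derivative h' d) (at 0)" "h d 0 = 0" using insert.prems by auto
  have q0: "q 0 = c" using insert.prems by (simp add: q_def PP_0)
  have A0: "A 0 = 0" by (simp add: A_def hd(2))
  define P where "P = pd d G c"
  have "(A has_derivative (\<lambda>x. x *\<^sub>R (h' d *\<^sub>R P))) (at 0)"
    unfolding has_derivative_at_alt
  proof (intro conjI allI impI)
    show "bounded_linear (\<lambda>x. x *\<^sub>R (h' d *\<^sub>R P))" by (rule bounded_linear_scaleR_left)
    fix e :: real assume e: "e > 0"
    define K where "K = norm P"
    define H where "H = \<bar>h' d\<bar>"
    have K0: "K \<ge> 0" and H0: "H \<ge> 0" by (auto simp: K_def H_def)
    define e1 where "e1 = min 1 (e / (2 * (K + 1)))"
    have e1: "e1 > 0" "e1 \<le> 1" "e1 * K \<le> e / 2"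
    proof -
      show "e1 > 0" "e1 \<le> 1" using e K0 by (auto simp: e1_def)
      have "e1 * K \<le> e / (2 * (K + 1)) * K" using K0 by (intro mult_right_mono) (auto simp: e1_def)
      also have "\<dots> \<le> e / 2" using K0 e by (simp add: field_simps)
      finally show "e1 * K \<le> e / 2" .
    qed
    obtain \<delta>1 where \<delta>1: "\<delta>1 > 0" "\<And>t. \<bar>t\<bar> < \<delta>1 \<Longrightarrow> \<bar>h d t - t * h' d\<bar> \<le> e1 * \<bar>t\<bar>"
    proof -
      have "(h d has_derivative (\<lambda>x. h' d * x)) (at 0)"
        using hd(1) by (simp add: has_field_derivative_def)
      then obtain \<delta> where "\<delta> > 0" "\<forall>y. norm (y - 0) < \<delta> \<longrightarrow>
          norm (h d y - h d 0 - h' d * (y - 0)) \<le> e1 * norm (y - 0)"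
        unfolding has_derivative_at_alt using e1(1) by blast
      then show ?thesis using that hd(2) by (auto simp: mult.commute)
    qed
    define e2 where "e2 = e / (6 * (H + 1))"
    have e2: "e2 > 0" using e H0 by (simp add: e2_def)
    have cP: "continuous_on S (pd d G)" using hc[OF b, of j] d by simp
    have "\<forall>B. open B \<longrightarrow> open (pd d G -` B \<inter> S)"
      using cP by (simp add: continuous_on_open_vimage[OF S(1)])
    then have o: "open (pd d G -` ball P e2 \<inter> S)" by simp
    have "c \<in> pd d G -` ball P e2 \<inter> S" using S(2) e2 by (simp add: P_def)
    then obtain \<eta> where \<eta>: "\<eta> > 0"
      "\<And>p. (\<forall>i. dist (p i) (c i) < \<eta>) \<Longrightarrow> p \<in> pd d G -` ball P e2 \<inter> S"
      using open_fun_ball[OF o] by blast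
    define M where "M t = (\<Sum>d'\<in>insert d D. \<bar>h d' t\<bar>)" for t
    have hc': "isCont (h d') 0" if "d' \<in> insert d D" for d'
      using insert.prems that DERIV_isCont by blast
    have "isCont M 0"
      unfolding M_def by (rule continuous_sum, rule continuous_rabs, rule hc')
    moreover have "M 0 = 0" using insert.prems by (auto simp: M_def intro!: sum.neutral)
    ultimately obtain \<delta>2 where \<delta>2: "\<delta>2 > 0" "\<And>t. \<bar>t\<bar> < \<delta>2 \<Longrightarrow> M t < \<eta>"
    proof -
      assume a: "\<And>\<delta>2. 0 < \<delta>2 \<Longrightarrow> (\<And>t. \<bar>t\<bar> < \<delta>2 \<Longrightarrow> M t < \<eta>) \<Longrightarrow> thesis"
      assume "isCont M 0" "M 0 = 0"
      then obtain \<delta> where "\<delta> > 0" "\<forall>x'. dist x' 0 < \<delta> \<longrightarrow> dist (M x') (M 0) < \<eta>"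
        using \<eta>(1) continuous_at_eps_delta by blast
      moreover have "M t < \<eta>" if "\<bar>t\<bar> < \<delta>" for t
      proof -
        have "\<bar>M t\<bar> < \<eta>" using \<open>\<forall>x'. dist x' 0 < \<delta> \<longrightarrow> dist (M x') (M 0) < \<eta>\<close> \<open>M 0 = 0\<close> that
          by (auto simp: dist_real_def)
        then show ?thesis by linarith
      qed
      ultimately show thesis using a[of \<delta>] by blast
    qed
    show "\<exists>\<delta>>0. \<forall>y. norm (y - 0) < \<delta> \<longrightarrow>
        norm (A y - A 0 - (y - 0) *\<^sub>R (h' d *\<^sub>R P)) \<le> e * norm (y - 0)"
    proof (intro exI[of _ "min \<delta>1 \<delta>2"] conjI allI impI)
      show "min \<delta>1 \<delta>2 > 0" using \<delta>1 \<delta>2 by simp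
      fix t :: real assume "norm (t - 0) < min \<delta>1 \<delta>2"
      then have t1: "\<bar>t\<bar> < \<delta>1" "\<bar>t\<bar> < \<delta>2" by auto
      define hh where "hh = h d t"
      have hh: "\<bar>hh - t * h' d\<bar> \<le> e1 * \<bar>t\<bar>" using \<delta>1(2)[OF t1(1)] by (simp add: hh_def)
      have hh2: "\<bar>hh\<bar> \<le> (H + 1) * \<bar>t\<bar>"
      proof -
        have "\<bar>hh\<bar> \<le> \<bar>t * h' d\<bar> + e1 * \<bar>t\<bar>" using hh by linarith
        also have "\<dots> \<le> H * \<bar>t\<bar> + 1 * \<bar>t\<bar>"
          using e1(2) by (intro add_mono mult_right_mono) (auto simp: H_def abs_mult)
        finally show ?thesis by (simp add: algebra_simps)
      qed
      define p where "p s = (q t)(j := q t j + s *\<^sub>R b)" for s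
      define g where "g s = G (p s)" for s
      define g' where "g' s = pd d G (p s)" for s
      have pts: "p s \<in> S \<and> dist (g' s) P < e2" if s: "s \<in> closed_segment 0 hh" for s
      proof -
        have sa: "\<bar>s\<bar> \<le> \<bar>hh\<bar>" using s by (auto simp: closed_segment_eq_real_ivl split: if_splits)
        have "dist (p s i) (c i) < \<eta>" for i
        proof -
          have "dist (p s i) (c i) \<le> norm (q t i - c i) + norm (if i = j then s *\<^sub>R b else 0)"
          proof (cases "i = j")
            case True
            have eq: "p s i - c i = (q t i - c i) + s *\<^sub>R b" using True by (simp add: p_def)
            have "dist (p s i) (c i) = norm ((q t i - c i) + s *\<^sub>R b)" by (simp only: dist_norm eq)
            also have "\<dots> \<le> norm (q t i - c i) + norm (s *\<^sub>R b)" by (rule norm_triangle_ineq)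
            finally show ?thesis using True by simp
          next
            case False then show ?thesis by (simp add: p_def dist_norm)
          qed
          also have "\<dots> \<le> (\<Sum>d\<in>D. \<bar>h d t\<bar>) + \<bar>hh\<bar>"
            using PP_dist[of D c h t i] insert.prems insert.hyps b sa
            by (intro add_mono) (auto simp: q_def)
          also have "\<dots> = M t" using insert.hyps by (simp add: M_def hh_def)
          also have "\<dots> < \<eta>" using \<delta>2(2)[OF t1(2)] .
          finally show ?thesis .
        qed
        then have "p s \<in> pd d G -` ball P e2 \<inter> S" using \<eta>(2) by blast
        then show ?thesis by (simp add: g'_def dist_commute)
      qed
      have gder: "(g has_vector_derivative g' s) (at s within closed_segment 0 hh)"
        if s: "s \<in> closed_segment 0 hh" for s
      proof -
        have pS: "p s \<in> S" using pts[OF s] by blast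
        have "(\<lambda>s'. g (s + s')) = (\<lambda>s'. G ((p s)(j := p s j + s' *\<^sub>R b)))"
          by (rule ext) (simp add: g_def p_def scaleR_add_left add.assoc)
        then have "((\<lambda>s'. g (s + s')) has_vector_derivative g' s) (at 0)"
          using hG[OF pS b, of j] by (simp add: g'_def d)
        then show ?thesis using vd_shift has_vector_derivative_at_within by blast
      qed
      have B: "norm (g' s - g' 0) \<le> 2 * e2" if s: "s \<in> closed_segment 0 hh" for s
      proof -
        have "g' s - g' 0 = (g' s - P) - (g' 0 - P)" by simp
        then have "norm (g' s - g' 0) \<le> norm (g' s - P) + norm (g' 0 - P)"
          using norm_triangle_ineq4[of "g' s - P" "g' 0 - P"] by simp
        then have "norm (g' s - g' 0) \<le> dist (g' s) P + dist (g' 0) P"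
          by (simp add: dist_norm)
        also have "\<dots> \<le> 2 * e2" using pts[OF s] pts[of 0] by simp
        finally show ?thesis .
      qed
      have X: "norm (g hh - g 0 - (hh - 0) *\<^sub>R g' 0) \<le> norm (hh - 0) * (2 * e2)"
        by (rule vector_differentiable_bound_linearization[OF gder _ B]) auto
      have g0: "g 0 = G (q t)" by (simp add: g_def p_def)
      have At: "A t = g hh - g 0" by (simp add: A_def g0 g_def p_def hh_def)
      have Y: "norm (hh *\<^sub>R (g' 0 - P)) \<le> \<bar>hh\<bar> * e2"
        using pts[of 0] by (simp add: dist_norm mult_left_mono)
      have Z: "norm ((hh - t * h' d) *\<^sub>R P) \<le> e1 * \<bar>t\<bar> * K"
        using hh K0 by (simp add: K_def mult_right_mono)
      have eq: "A t - A 0 - (t - 0) *\<^sub>R (h' d *\<^sub>R P) =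
          (g hh - g 0 - (hh - 0) *\<^sub>R g' 0) + hh *\<^sub>R (g' 0 - P) + (hh - t * h' d) *\<^sub>R P"
        by (simp add: At A0 algebra_simps)
      have "norm (A t - A 0 - (t - 0) *\<^sub>R (h' d *\<^sub>R P)) \<le>
          \<bar>hh\<bar> * (2 * e2) + \<bar>hh\<bar> * e2 + e1 * \<bar>t\<bar> * K"
      proof -
        have "norm ((g hh - g 0 - (hh - 0) *\<^sub>R g' 0) + hh *\<^sub>R (g' 0 - P) + (hh - t * h' d) *\<^sub>R P)
           \<le> norm (g hh - g 0 - (hh - 0) *\<^sub>R g' 0) + norm (hh *\<^sub>R (g' 0 - P)) + norm ((hh - t * h' d) *\<^sub>R P)"
          by (meson norm_triangle_ineq order_trans add_right_mono)
        moreover have "norm (g hh - g 0 - (hh - 0) *\<^sub>R g' 0) \<le> \<bar>hh\<bar> * (2 * e2)" using X by simp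
        ultimately show ?thesis unfolding eq using Y Z by linarith
      qed
      also have "\<dots> = \<bar>hh\<bar> * (3 * e2) + (e1 * K) * \<bar>t\<bar>" by (simp add: algebra_simps)
      also have "\<dots> \<le> ((H + 1) * \<bar>t\<bar>) * (3 * e2) + (e / 2) * \<bar>t\<bar>"
        using hh2 e2 e1(3) by (intro add_mono mult_right_mono) auto
      also have "\<dots> = e * \<bar>t\<bar>" using H0 by (simp add: e2_def field_simps)
      finally show "norm (A t - A 0 - (t - 0) *\<^sub>R (h' d *\<^sub>R P)) \<le> e * norm (t - 0)" by simp
    qed
  qed
  then have A: "(A has_vector_derivative h' d *\<^sub>R P) (at 0)"
    by (simp add: has_vector_derivative_def)
  have "(\<lambda>t. G (PP c (insert d D) h t)) = (\<lambda>t. A t + G (PP c D h t))"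
  proof (rule ext)
    fix t
    have "PP c (insert d D) h t = (PP c D h t)(j := PP c D h t j + h d t *\<^sub>R b)"
      using PP_insert[OF insert.hyps, of c h t] d by simp
    then show "G (PP c (insert d D) h t) = A t + G (PP c D h t)" by (simp add: A_def q_def)
  qed
  then show ?case using has_vector_derivative_add[OF A IH] insert.hyps by (simp add: P_def)
qed

lemma sum_fst_eq:
  assumes "finite I" "finite B"
  shows "(\<Sum>d\<in>I\<times>B. if fst d = i then F d else 0) = (if i \<in> I then \<Sum>e\<in>B. F (i,e) else 0)"
proof -
  have "(\<Sum>i'\<in>I. \<Sum>e\<in>B. if i' = i then F (i',e) else 0) = (\<Sum>(i',e)\<in>I\<times>B. if i' = i then F (i',e) else 0)"
    by (rule sum.cartesian_product)
  also have "\<dots> = (\<Sum>d\<in>I\<times>B. if fst d = i then F d else 0)" by (rule sum.cong) auto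
  finally have "(\<Sum>d\<in>I\<times>B. if fst d = i then F d else 0) = (\<Sum>i'\<in>I. \<Sum>e\<in>B. if i' = i then F (i',e) else 0)" ..
  also have "\<dots> = (\<Sum>i'\<in>I. if i' = i then (\<Sum>e\<in>B. F (i',e)) else 0)"
    by (rule sum.cong) auto
  also have "\<dots> = (if i \<in> I then \<Sum>e\<in>B. F (i,e) else 0)"
    using assms(1) by (simp add: sum.delta')
  finally show ?thesis .
qed

lemma curve_chain:
  fixes G :: "(int \<Rightarrow> 'a::euclidean_space) \<Rightarrow> 'c::real_normed_vector"
    and \<gamma> :: "real \<Rightarrow> int \<Rightarrow> 'a" and \<gamma>' :: "int \<Rightarrow> 'a"
  assumes G: "Cinf_seq_on S G" and c: "c \<in> S" and I: "finite I" "depends_only I G"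
    and g0: "\<gamma> 0 = c" and gd: "\<And>i. i \<in> I \<Longrightarrow> ((\<lambda>t. \<gamma> t i) has_vector_derivative \<gamma>' i) (at 0)"
  shows "((\<lambda>t. G (\<gamma> t)) has_vector_derivative
      (\<Sum>d\<in>I\<times>Basis. (\<gamma>' (fst d) \<bullet> snd d) *\<^sub>R pd d G c)) (at 0)"
proof -
  define h where "h d t = (\<gamma> t (fst d) - c (fst d)) \<bullet> snd d" for d :: "int \<times> 'a" and t
  define h' where "h' d = \<gamma>' (fst d) \<bullet> snd d" for d :: "int \<times> 'a"
  have S: "open S" using G by (simp add: Cinf_seq_on_def)
  have hG: "((\<lambda>s. G (p(i := p i + s *\<^sub>R b))) has_vector_derivative pd (i,b) G p) (at 0)"
    if "p \<in> S" "b \<in> Basis" for p i b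
    using pd_has[OF Cinf_diff[OF G that]] .
  have hc: "continuous_on S (pd (i,b) G)" if "b \<in> Basis" for i b
    using Cinf_cont[OF Cinf_pd[OF G that]] .
  have hd: "\<forall>d\<in>I\<times>Basis. (h d has_real_derivative h' d) (at 0) \<and> h d 0 = 0"
  proof
    fix d :: "int \<times> 'a" assume d: "d \<in> I \<times> Basis"
    have "((\<lambda>t. \<gamma> t (fst d) - c (fst d)) has_vector_derivative \<gamma>' (fst d) - 0) (at 0)"
      using gd d by (intro has_vector_derivative_diff) auto
    then have "((\<lambda>t. (\<gamma> t (fst d) - c (fst d)) \<bullet> snd d) has_vector_derivative (\<gamma>' (fst d) - 0) \<bullet> snd d) (at 0)"
      by (rule bounded_linear.has_vector_derivative[OF bounded_linear_inner_left])
    then show "(h d has_real_derivative h' d) (at 0) \<and> h d 0 = 0"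
      unfolding has_real_derivative_iff_has_vector_derivative h_def h'_def using g0
      by (simp add: fun_eq_iff)
  qed
  have D: "finite (I \<times> Basis)" "I \<times> Basis \<subseteq> UNIV \<times> Basis" using I by auto
  have main: "((\<lambda>t. G (PP c (I\<times>Basis) h t)) has_vector_derivative (\<Sum>d\<in>I\<times>Basis. h' d *\<^sub>R pd d G c)) (at 0)"
    by (rule CLD[OF S c hG hc D hd])
  have eq: "G (PP c (I\<times>Basis) h t) = G (\<gamma> t)" for t
  proof -
    have "\<forall>i\<in>I. PP c (I\<times>Basis) h t i = \<gamma> t i"
    proof
      fix i assume i: "i \<in> I"
      have "PP c (I\<times>Basis) h t i = c i + (\<Sum>e\<in>Basis. h (i,e) t *\<^sub>R e)"
        unfolding PP_def using sum_fst_eq[OF I(1) finite_Basis, of i "\<lambda>d. h d t *\<^sub>R snd d"] i by simp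
      also have "\<dots> = c i + (\<gamma> t i - c i)"
        by (simp add: h_def euclidean_representation)
      finally show "PP c (I\<times>Basis) h t i = \<gamma> t i" by simp
    qed
    then show ?thesis using I(2) unfolding depends_only_def by blast
  qed
  show ?thesis using main unfolding eq h'_def .
qed

lemma chain1:
  fixes G :: "(int \<Rightarrow> 'a::euclidean_space) \<Rightarrow> 'c::real_normed_vector"
    and \<Phi> :: "(int \<Rightarrow> 'e::euclidean_space) \<Rightarrow> int \<Rightarrow> 'a"
  assumes G: "Cinf_seq_on S G" and I: "finite I" "depends_only I G"
    and \<Phi>: "\<And>i. Cinf_seq_on T (\<lambda>w. \<Phi> w i)" and \<Phi>S: "\<And>w. w \<in> T \<Longrightarrow> \<Phi> w \<in> S"
    and w: "w \<in> T" and b: "b \<in> Basis"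
  shows "((\<lambda>t. G (\<Phi> (w(j := w j + t *\<^sub>R b)))) has_vector_derivative
      (\<Sum>d\<in>I\<times>Basis. (pd (j,b) (\<lambda>w. \<Phi> w (fst d)) w \<bullet> snd d) *\<^sub>R pd d G (\<Phi> w))) (at 0)"
proof (rule curve_chain[OF G \<Phi>S[OF w] I])
  show "\<Phi> (w(j := w j + 0 *\<^sub>R b)) = \<Phi> w" by simp
  fix i
  show "((\<lambda>t. \<Phi> (w(j := w j + t *\<^sub>R b)) i) has_vector_derivative pd (j, b) (\<lambda>w. \<Phi> w i) w) (at 0)"
    using pd_has[OF Cinf_diff[OF \<Phi> w b]] .
qed

lemma sm_chain0:
  fixes G :: "(int \<Rightarrow> 'a::euclidean_space) \<Rightarrow> 'c::real_normed_vector"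
    and \<Phi> :: "(int \<Rightarrow> 'e::euclidean_space) \<Rightarrow> int \<Rightarrow> 'a"
  assumes G: "Cinf_seq_on S G" and I: "finite I" "depends_only I G"
    and \<Phi>: "\<And>i. Cinf_seq_on T (\<lambda>w. \<Phi> w i)" and \<Phi>S: "\<And>w. w \<in> T \<Longrightarrow> \<Phi> w \<in> S" and T: "open T"
  shows "sm 0 T (\<lambda>w. G (\<Phi> w))"
proof -
  have c\<Phi>: "continuous_on T \<Phi>"
    by (rule continuous_on_coordinatewise_then_product) (rule Cinf_cont[OF \<Phi>])
  have "continuous_on T (\<lambda>w. G (\<Phi> w))"
    by (rule continuous_on_compose2[OF Cinf_cont[OF G] c\<Phi>]) (use \<Phi>S in auto)
  moreover have "(\<lambda>t. G (\<Phi> (w(j := w j + t *\<^sub>R b)))) differentiable (at 0)" if "w \<in> T" "b \<in> Basis" for w j b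
    using differentiableI_vector[OF chain1[OF G I \<Phi> \<Phi>S that]] .
  ultimately show ?thesis using T by (simp add: sm0)
qed

lemma sm_chain:
  fixes G :: "(int \<Rightarrow> 'a::euclidean_space) \<Rightarrow> 'c::real_normed_vector"
    and \<Phi> :: "(int \<Rightarrow> 'e::euclidean_space) \<Rightarrow> int \<Rightarrow> 'a"
  assumes I: "finite I" and \<Phi>: "\<And>i. Cinf_seq_on T (\<lambda>w. \<Phi> w i)"
    and \<Phi>S: "\<And>w. w \<in> T \<Longrightarrow> \<Phi> w \<in> S" and T: "open T"
  shows "Cinf_seq_on S G \<Longrightarrow> depends_only I G \<Longrightarrow> sm n T (\<lambda>w. G (\<Phi> w))"
proof (induction n arbitrary: G)
  case 0 then show ?case using sm_chain0[OF 0(1) I 0(2) \<Phi> \<Phi>S T] by simp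
next
  case (Suc n)
  have s0: "sm 0 T (\<lambda>w. G (\<Phi> w))" using sm_chain0[OF Suc.prems(1) I Suc.prems(2) \<Phi> \<Phi>S T] .
  have "sm n T (pd (j,b) (\<lambda>w. G (\<Phi> w)))" if b: "b \<in> Basis" for j b
  proof (rule sm_local)
    show "sm n T (\<lambda>w. \<Sum>d\<in>I\<times>Basis. (pd (j,b) (\<lambda>w. \<Phi> w (fst d)) w \<bullet> snd d) *\<^sub>R pd d G (\<Phi> w))"
    proof (rule sm_sum)
      show "finite (I \<times> (Basis::'a set))" using I by simp
      show "open T" by fact
      fix d :: "int \<times> 'a" assume d: "d \<in> I \<times> Basis"
      have "Cinf_seq_on T (pd (j,b) (\<lambda>w. \<Phi> w (fst d)))" using Cinf_pd[OF \<Phi> b] .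
      then have s1: "sm n T (pd (j,b) (\<lambda>w. \<Phi> w (fst d)))" by (simp add: Cinf_sm)
      have s2: "sm n T (\<lambda>w. pd (j,b) (\<lambda>w. \<Phi> w (fst d)) w \<bullet> snd d)"
        by (rule sm_linear[OF bounded_linear_inner_left s1])
      have dd: "d = (fst d, snd d)" "snd d \<in> Basis" using d by auto
      have "Cinf_seq_on S (pd d G)" using Cinf_pd[OF Suc.prems(1) dd(2), of "fst d"] dd(1) by simp
      moreover have "depends_only I (pd d G)" using depends_only_pd[OF Suc.prems(2)] .
      ultimately have s3: "sm n T (\<lambda>w. pd d G (\<Phi> w))" by (rule Suc.IH)
      show "sm n T (\<lambda>w. (pd (j,b) (\<lambda>w. \<Phi> w (fst d)) w \<bullet> snd d) *\<^sub>R pd d G (\<Phi> w))"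
        by (rule sm_scaleR[OF s2 s3])
    qed
    fix w assume w: "w \<in> T"
    show "(\<Sum>d\<in>I\<times>Basis. (pd (j,b) (\<lambda>w. \<Phi> w (fst d)) w \<bullet> snd d) *\<^sub>R pd d G (\<Phi> w)) =
        pd (j, b) (\<lambda>w. G (\<Phi> w)) w"
      by (rule pd_eqI[symmetric]) (rule chain1[OF Suc.prems(1) I Suc.prems(2) \<Phi> \<Phi>S w b])
  qed
  then show ?case using s0 by (simp add: sm_Suc)
qed

lemma Cinf_chain:
  fixes G :: "(int \<Rightarrow> 'a::euclidean_space) \<Rightarrow> 'c::real_normed_vector"
    and \<Phi> :: "(int \<Rightarrow> 'e::euclidean_space) \<Rightarrow> int \<Rightarrow> 'a"
  assumes "Cinf_seq_on S G" "finite I" "depends_only I G" "\<And>i. Cinf_seq_on T (\<lambda>w. \<Phi> w i)"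
    "\<And>w. w \<in> T \<Longrightarrow> \<Phi> w \<in> S" "open T"
  shows "Cinf_seq_on T (\<lambda>w. G (\<Phi> w))"
  using sm_chain[OF assms(2,4,5,6) assms(1,3)] by (simp add: Cinf_sm)

lemma vd_const: "vector_derivative (\<lambda>t::real. k) (at 0) = 0"
  by (rule vector_derivative_at[OF has_vector_derivative_const])

definition allj :: "(int \<times> 'a) list \<Rightarrow> int \<Rightarrow> bool" where
  "allj ds j \<longleftrightarrow> (\<forall>d\<in>set ds. fst d = j)"

lemma allj_simps [simp]: "allj [] j" "allj (d # ds) j \<longleftrightarrow> fst d = j \<and> allj ds j"
  by (auto simp: allj_def)

lemma iter_coord:
  "iter_pd_seq ds (\<lambda>c. h (c j)) =
     (\<lambda>c. if allj ds j then iter_pd (map snd ds) h (c j) else 0)"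
proof (induction ds)
  case Nil then show ?case by simp
next
  case (Cons d ds)
  show ?case
  proof (rule ext)
    fix c :: "int \<Rightarrow> 'a"
    show "iter_pd_seq (d # ds) (\<lambda>c. h (c j)) c =
      (if allj (d # ds) j then iter_pd (map snd (d # ds)) h (c j) else 0)"
    proof (cases "allj ds j")
      case False
      have e: "iter_pd_seq ds (\<lambda>c. h (c j)) = (\<lambda>c. 0)" by (simp only: Cons.IH if_not_P[OF False])
      show ?thesis using False by (simp add: e vd_const)
    next
      case True
      show ?thesis
      proof (cases "fst d = j")
        case True2: True
        then show ?thesis using True by (simp add: Cons.IH)
      next
        case False
        then show ?thesis using True by (simp add: Cons.IH vd_const)
      qed
    qed
  qed
qed

lemma Cinf_coord:
  fixes h :: "'a::euclidean_space \<Rightarrow> 'b::real_normed_vector"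
  assumes h: "Cinf_on U h"
  shows "Cinf_seq_on {c. c j \<in> U} (\<lambda>c. h (c j))"
  unfolding Cinf_seq_on_def
proof (intro conjI allI impI ballI)
  have U: "open U" using h by (simp add: Cinf_on_def)
  have "open ((\<lambda>c::int \<Rightarrow> 'a. c j) -` U)"
    by (rule open_vimage[OF U continuous_on_product_coordinates])
  then show "open {c::int \<Rightarrow> 'a. c j \<in> U}" by (simp add: vimage_def)
  fix ds :: "(int \<times> 'a) list" assume b: "\<forall>d\<in>set ds. snd d \<in> Basis"
  have sb: "set (map snd ds) \<subseteq> Basis" using b by auto
  have ch: "continuous_on U (iter_pd (map snd ds) h)" using h sb by (simp add: Cinf_on_def)
  show "continuous_on {c. c j \<in> U} (iter_pd_seq ds (\<lambda>c. h (c j)))"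
  proof (cases "allj ds j")
    case True
    have "continuous_on {c. c j \<in> U} (\<lambda>c. iter_pd (map snd ds) h (c j))"
      by (rule continuous_on_compose2[OF ch]) (auto intro: continuous_on_subset[OF continuous_on_product_coordinates])
    then show ?thesis using True by (simp add: iter_coord)
  next
    case False
    have e: "iter_pd_seq ds (\<lambda>c. h (c j)) = (\<lambda>c. 0)" by (simp only: iter_coord if_not_P[OF False])
    show ?thesis by (simp add: e)
  qed
  fix w :: "int \<Rightarrow> 'a" and i and b' :: 'a assume w: "w \<in> {c. c j \<in> U}" and b': "b' \<in> Basis"
  show "(\<lambda>t. iter_pd_seq ds (\<lambda>c. h (c j)) (w(i := w i + t *\<^sub>R b'))) differentiable at 0"
  proof (cases "allj ds j \<and> i = j")
    case True
    have "(\<lambda>t. iter_pd (map snd ds) h (w j + t *\<^sub>R b')) differentiable at 0"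
      using h sb w b' by (simp add: Cinf_on_def)
    then show ?thesis using True by (simp add: iter_coord)
  next
    case False
    then have "(\<lambda>t. iter_pd_seq ds (\<lambda>c. h (c j)) (w(i := w i + t *\<^sub>R b'))) =
       (\<lambda>t. if allj ds j then iter_pd (map snd ds) h (w j) else 0)"
      by (auto simp: iter_coord)
    then show ?thesis by simp
  qed
qed

lemma iter_pd_linear:
  assumes L: "bounded_linear L"
  shows "iter_pd ds L = (if ds = [] then L else if length ds = 1 then (\<lambda>_. L (hd ds)) else (\<lambda>_. 0))"
proof (induction ds)
  case Nil then show ?case by simp
next
  case (Cons d ds)
  show ?case
  proof (cases "ds = []")
    case True
    have "vector_derivative (\<lambda>t. L (w + t *\<^sub>R d)) (at 0) = L d" for w
    proof (rule vector_derivative_at)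
      have "((\<lambda>t. w + t *\<^sub>R d) has_vector_derivative d) (at 0)"
        by (auto intro!: derivative_eq_intros)
      then show "((\<lambda>t. L (w + t *\<^sub>R d)) has_vector_derivative L d) (at 0)"
        by (rule bounded_linear.has_vector_derivative[OF L])
    qed
    then show ?thesis using True Cons by (simp add: fun_eq_iff)
  next
    case False
    then show ?thesis using Cons by (auto simp: fun_eq_iff vd_const)
  qed
qed

lemma Cinf_linear:
  fixes L :: "'a::euclidean_space \<Rightarrow> 'b::real_normed_vector"
  assumes L: "bounded_linear L"
  shows "Cinf_on UNIV L"
  unfolding Cinf_on_def
proof (intro conjI allI impI ballI)
  show "open (UNIV :: 'a set)" by simp
  fix ds :: "'a list"
  show "continuous_on UNIV (iter_pd ds L)"
    by (simp add: iter_pd_linear[OF L] linear_continuous_on[OF L])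
  fix w b :: 'a
  show "(\<lambda>t. iter_pd ds L (w + t *\<^sub>R b)) differentiable at 0"
  proof (cases "ds = []")
    case True
    have "((\<lambda>t. w + t *\<^sub>R b) has_vector_derivative b) (at 0)"
      by (auto intro!: derivative_eq_intros)
    then have "((\<lambda>t. L (w + t *\<^sub>R b)) has_vector_derivative L b) (at 0)"
      by (rule bounded_linear.has_vector_derivative[OF L])
    then show ?thesis using True differentiableI_vector by (simp add: iter_pd_linear[OF L]) blast
  next
    case False then show ?thesis by (simp add: iter_pd_linear[OF L])
  qed
qed

lemma Cinf_add: "Cinf_seq_on T A \<Longrightarrow> Cinf_seq_on T B \<Longrightarrow> Cinf_seq_on T (\<lambda>w. A w + B w)"
  by (simp add: Cinf_sm sm_add)

lemma Cinf_lin: "bounded_linear L \<Longrightarrow> Cinf_seq_on T A \<Longrightarrow> Cinf_seq_on T (\<lambda>w. L (A w))"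
  by (simp add: Cinf_sm sm_linear)

lemma Cinf_pair:
  assumes "Cinf_seq_on T A" "Cinf_seq_on T B"
  shows "Cinf_seq_on T (\<lambda>w. (A w, B w))"
proof -
  have "Cinf_seq_on T (\<lambda>w. (A w, 0) + (0, B w))"
    by (rule Cinf_add[OF Cinf_lin[OF _ assms(1)] Cinf_lin[OF _ assms(2)]])
       (auto intro!: bounded_linear_Pair bounded_linear_ident bounded_linear_zero)
  then show ?thesis by simp
qed

lemma Cinf_compose_seq:
  fixes G :: "(int \<Rightarrow> 'a::euclidean_space) \<Rightarrow> 'c::real_normed_vector"
    and \<Phi> :: "(int \<Rightarrow> 'e::euclidean_space) \<Rightarrow> int \<Rightarrow> 'a"
  assumes G: "Cinf_seq_on S G" and I: "finite I" "depends_only I G"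
    and \<Phi>: "\<And>i. Cinf_seq_on T0 (\<lambda>w. \<Phi> w i)" and T0: "open T0"
  shows "open (\<Phi> -` S \<inter> T0)" "Cinf_seq_on (\<Phi> -` S \<inter> T0) (\<lambda>w. G (\<Phi> w))"
proof -
  have c\<Phi>: "continuous_on T0 \<Phi>"
    by (rule continuous_on_coordinatewise_then_product) (rule Cinf_cont[OF \<Phi>])
  have S: "open S" using G by (simp add: Cinf_seq_on_def)
  show o: "open (\<Phi> -` S \<inter> T0)" using c\<Phi> S T0 continuous_on_open_vimage by blast
  show "Cinf_seq_on (\<Phi> -` S \<inter> T0) (\<lambda>w. G (\<Phi> w))"
  proof (rule Cinf_chain[OF G I])
    show "Cinf_seq_on (\<Phi> -` S \<inter> T0) (\<lambda>w. \<Phi> w i)" for i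
      using Cinf_subset[OF \<Phi> o] by blast
  qed (use o in auto)
qed

lemma depends_only_coord: "depends_only {j} (\<lambda>c. h (c j))"
  by (simp add: depends_only_def)

lemma Cinf_proj:
  fixes L :: "'a::euclidean_space \<Rightarrow> 'b::real_normed_vector"
  assumes "bounded_linear L"
  shows "Cinf_seq_on UNIV (\<lambda>c. L (c j))"
  using Cinf_coord[OF Cinf_linear[OF assms], of j] by simp

lemma local_diffeo_rev:
  assumes "local_diffeo_inv F G p"
  shows "local_diffeo_inv G F (F p)"
proof -
  obtain N where N: "open N" "p \<in> N" "open (F ` N)" "\<forall>a\<in>N. G (F a) = a" "Cinf_on N F" "Cinf_on (F ` N) G"
    using assms unfolding local_diffeo_inv_def by blast
  have "G ` (F ` N) = N" using N(4) by (force simp: image_image)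
  then show ?thesis unfolding local_diffeo_inv_def using N
    by (intro exI[of _ "F ` N"]) auto
qed

lemma tc_lemma:
  fixes z :: "int \<Rightarrow> 'x::zero" and v :: "int \<Rightarrow> 'u"
  assumes A: "\<And>k. \<psi>x (z k) (v k) = x (-k-1)" "\<And>k. \<psi>u (z k) (v k) = u (-k-1)"
     "\<And>k. v k = g (x (-k-1)) (u (-k-1))"
  shows "(\<lambda>i. if i = 0 then (\<psi>x (fst (traj_coords \<psi>u z v k 0)) (snd (traj_coords \<psi>u z v k 0)),
                             \<psi>u (fst (traj_coords \<psi>u z v k 0)) (snd (traj_coords \<psi>u z v k 0)))
             else (0, snd (traj_coords \<psi>u z v k (- i)))) = traj_coords g x u (-k-1)"
proof (rule ext)
  fix i :: int
  consider "i = 0" | "i < 0" | "i > 0" by linarith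
  then show "(if i = 0 then (\<psi>x (fst (traj_coords \<psi>u z v k 0)) (snd (traj_coords \<psi>u z v k 0)),
                             \<psi>u (fst (traj_coords \<psi>u z v k 0)) (snd (traj_coords \<psi>u z v k 0)))
             else (0, snd (traj_coords \<psi>u z v k (- i)))) = traj_coords g x u (-k-1) i"
  proof cases
    case 1 then show ?thesis using A(1,2)[of k] by (simp add: traj_coords_def)
  next
    case 2
    have e: "-(k + - i) - 1 = -k - 1 + i" by simp
    have "v (k + - i) = g (x (-k - 1 + i)) (u (-k - 1 + i))" using A(3)[of "k + - i"] unfolding e .
    then show ?thesis using 2 by (simp add: traj_coords_def)
  next
    case 3
    have e: "-(k + - i) - 1 = -k - 1 + i" by simp
    have "\<psi>u (z (k + - i)) (v (k + - i)) = u (-k - 1 + i)" using A(2)[of "k + - i"] unfolding e .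
    then show ?thesis using 3 by (simp add: traj_coords_def)
  qed
qed

lemma Cinf_on_cont:
  fixes h :: "'a::euclidean_space \<Rightarrow> 'b::real_normed_vector"
  assumes "Cinf_on U h" shows "continuous_on U h"
proof -
  have "set ([]::'a list) \<subseteq> Basis" by simp
  then have "continuous_on U (iter_pd [] h)" using assms unfolding Cinf_on_def by blast
  then show ?thesis by simp
qed

lemma transfer:
  fixes f :: "'x::euclidean_space \<Rightarrow> 'u::euclidean_space \<Rightarrow> 'x" and g :: "'x \<Rightarrow> 'u \<Rightarrow> 'u"
    and \<psi>x :: "'x \<Rightarrow> 'u \<Rightarrow> 'x" and \<psi>u :: "'x \<Rightarrow> 'u \<Rightarrow> 'u"
    and \<phi> \<phi>' :: "(int \<Rightarrow> 'x \<times> 'u) \<Rightarrow> 'u"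
  assumes diffeo: "local_diffeo_inv (\<lambda>p. (f (fst p) (snd p), g (fst p) (snd p)))
                                  (\<lambda>q. (\<psi>x (fst q) (snd q), \<psi>u (fst q) (snd q))) (x0, u0)"
    and eq: "f x0 u0 = x0"
    and fl: "flat_output_win f g x0 u0 \<phi> r1 r2"
    and dep': "\<exists>q1 q2::nat. depends_only {- int q1 .. int q2} \<phi>'"
    and sm': "\<exists>S. traj_coords \<psi>u (\<lambda>_. x0) (\<lambda>_. g x0 u0) 0 \<in> S \<and> Cinf_seq_on S \<phi>'"
    and agree: "\<And>c. (\<forall>i. i \<noteq> 0 \<longrightarrow> fst (c i) = 0) \<Longrightarrow>
        f (\<psi>x (fst (c 0)) (snd (c 0))) (\<psi>u (fst (c 0)) (snd (c 0))) = fst (c 0) \<Longrightarrow>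
        g (\<psi>x (fst (c 0)) (snd (c 0))) (\<psi>u (fst (c 0)) (snd (c 0))) = snd (c 0) \<Longrightarrow>
        \<phi>' c = \<phi> (\<lambda>i. if i = 0 then (\<psi>x (fst (c 0)) (snd (c 0)), \<psi>u (fst (c 0)) (snd (c 0)))
                      else (0, snd (c (- i))))"
  shows "flat_output_win \<psi>x \<psi>u x0 (g x0 u0) \<phi>' r2 r1"
proof -
  define Fp where "Fp = (\<lambda>p. (f (fst p) (snd p), g (fst p) (snd p)))"
  define Gp where "Gp = (\<lambda>q. (\<psi>x (fst q) (snd q), \<psi>u (fst q) (snd q)))"
  obtain Nd where Nd: "open Nd" "(x0,u0) \<in> Nd" "open (Fp ` Nd)" "\<forall>a\<in>Nd. Gp (Fp a) = a"
      "Cinf_on Nd Fp" "Cinf_on (Fp ` Nd) Gp"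
    using diffeo unfolding local_diffeo_inv_def Fp_def Gp_def by blast
  define V where "V = Fp ` Nd"
  have GF: "\<psi>x (f x u) (g x u) = x" "\<psi>u (f x u) (g x u) = u" "(f x u, g x u) \<in> V"
    if "(x, u) \<in> Nd" for x u
  proof -
    have "Gp (Fp (x,u)) = (x,u)" using Nd(4) that by blast
    then show "\<psi>x (f x u) (g x u) = x" "\<psi>u (f x u) (g x u) = u" by (simp_all add: Fp_def Gp_def)
    have "Fp (x,u) \<in> Fp ` Nd" using that by (rule imageI)
    then show "(f x u, g x u) \<in> V" by (simp add: Fp_def V_def)
  qed
  have FG: "f (\<psi>x z v) (\<psi>u z v) = z" "g (\<psi>x z v) (\<psi>u z v) = v" "(\<psi>x z v, \<psi>u z v) \<in> Nd"
    if zv: "(z, v) \<in> V" for z v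
  proof -
    obtain a where a0: "a \<in> Nd" "(z, v) = Fp a" using zv unfolding V_def by (rule imageE) simp
    obtain xa ua where "a = (xa, ua)" by fastforce
    then have a: "(xa, ua) \<in> Nd" "(z, v) = Fp (xa, ua)" using a0 by simp_all
    then have zv': "z = f xa ua" "v = g xa ua" by (simp_all add: Fp_def)
    show "f (\<psi>x z v) (\<psi>u z v) = z" "g (\<psi>x z v) (\<psi>u z v) = v" "(\<psi>x z v, \<psi>u z v) \<in> Nd"
      using GF[OF a(1)] a(1) unfolding zv' by simp_all
  qed
  have Vo: "open V" using Nd(3) by (simp add: V_def)
  have cG: "continuous_on V Gp"
    using Cinf_on_cont[OF Nd(6)] by (simp add: V_def)
  define c0 where "c0 = traj_coords g (\<lambda>_. x0) (\<lambda>_. u0) 0"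
  define y0 where "y0 = \<phi> c0"
  have tc_const: "traj_coords g (\<lambda>_. x0) (\<lambda>_. u0) k = c0" for k
    by (simp add: c0_def traj_coords_def)
  obtain Fx Fu Tf Nf Wf where
      dFx: "depends_only {- int r1 .. int r2 - 1} Fx" and dFu: "depends_only {- int r1 .. int r2} Fu"
      and Tf: "(\<lambda>_. \<phi> (traj_coords g (\<lambda>_. x0) (\<lambda>_. u0) 0)) \<in> Tf \<and> Cinf_seq_on Tf Fx \<and> Cinf_seq_on Tf Fu"
      and NW: "open Nf \<and> (x0, u0) \<in> Nf \<and> open Wf \<and> \<phi> (traj_coords g (\<lambda>_. x0) (\<lambda>_. u0) 0) \<in> Wf \<and>
            (\<forall>x u. is_traj f x u \<and> (\<forall>k. (x k, u k) \<in> Nf) \<longrightarrow>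
               (\<forall>k. x k = Fx (\<lambda>i. \<phi> (traj_coords g x u (k + i))) \<and>
                    u k = Fu (\<lambda>i. \<phi> (traj_coords g x u (k + i))))) \<and>
            (\<forall>y. (\<forall>k. y k \<in> Wf) \<longrightarrow>
               (let x = (\<lambda>k. Fx (\<lambda>i. y (k + i))); u = (\<lambda>k. Fu (\<lambda>i. y (k + i))) in
                  is_traj f x u \<and> (\<forall>k. y k = \<phi> (traj_coords g x u k))))"
  proof -
    assume r: "\<And>Fx Fu Tf Nf Wf. depends_only {- int r1 .. int r2 - 1} Fx \<Longrightarrow> depends_only {- int r1 .. int r2} Fu \<Longrightarrow>
      (\<lambda>_. \<phi> (traj_coords g (\<lambda>_. x0) (\<lambda>_. u0) 0)) \<in> Tf \<and> Cinf_seq_on Tf Fx \<and> Cinf_seq_on Tf Fu \<Longrightarrow>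
      open Nf \<and> (x0, u0) \<in> Nf \<and> open Wf \<and> \<phi> (traj_coords g (\<lambda>_. x0) (\<lambda>_. u0) 0) \<in> Wf \<and>
            (\<forall>x u. is_traj f x u \<and> (\<forall>k. (x k, u k) \<in> Nf) \<longrightarrow>
               (\<forall>k. x k = Fx (\<lambda>i. \<phi> (traj_coords g x u (k + i))) \<and>
                    u k = Fu (\<lambda>i. \<phi> (traj_coords g x u (k + i))))) \<and>
            (\<forall>y. (\<forall>k. y k \<in> Wf) \<longrightarrow>
               (let x = (\<lambda>k. Fx (\<lambda>i. y (k + i))); u = (\<lambda>k. Fu (\<lambda>i. y (k + i))) in
                  is_traj f x u \<and> (\<forall>k. y k = \<phi> (traj_coords g x u k)))) \<Longrightarrow> thesis"
    have "(\<exists>Fx Fu. depends_only {- int r1 .. int r2 - 1} Fx \<and> depends_only {- int r1 .. int r2} Fu \<and>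
         (\<exists>T. (\<lambda>_. \<phi> (traj_coords g (\<lambda>_. x0) (\<lambda>_. u0) 0)) \<in> T \<and> Cinf_seq_on T Fx \<and> Cinf_seq_on T Fu) \<and>
         (\<exists>N W. open N \<and> (x0, u0) \<in> N \<and> open W \<and> \<phi> (traj_coords g (\<lambda>_. x0) (\<lambda>_. u0) 0) \<in> W \<and>
            (\<forall>x u. is_traj f x u \<and> (\<forall>k. (x k, u k) \<in> N) \<longrightarrow>
               (\<forall>k. x k = Fx (\<lambda>i. \<phi> (traj_coords g x u (k + i))) \<and>
                    u k = Fu (\<lambda>i. \<phi> (traj_coords g x u (k + i))))) \<and>
            (\<forall>y. (\<forall>k. y k \<in> W) \<longrightarrow>
               (let x = (\<lambda>k. Fx (\<lambda>i. y (k + i))); u = (\<lambda>k. Fu (\<lambda>i. y (k + i))) in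
                  is_traj f x u \<and> (\<forall>k. y k = \<phi> (traj_coords g x u k))))))"
      using fl unfolding flat_output_win_def Let_def[of "traj_coords g (\<lambda>_. x0) (\<lambda>_. u0) 0"]
        Let_def[of "\<phi> (traj_coords g (\<lambda>_. x0) (\<lambda>_. u0) 0)"] by (elim conjE) assumption
    then show thesis using r by (elim exE conjE) blast
  qed
  have Tf': "(\<lambda>_. y0) \<in> Tf" "Cinf_seq_on Tf Fx" "Cinf_seq_on Tf Fu"
    using Tf by (simp_all add: y0_def c0_def)
  have Nf: "open Nf" "(x0, u0) \<in> Nf" and Wf: "open Wf" "y0 \<in> Wf"
    using NW by (simp_all add: y0_def c0_def)
  have trajN: "\<And>x u. is_traj f x u \<Longrightarrow> (\<forall>k. (x k, u k) \<in> Nf) \<Longrightarrow>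
               (\<forall>k. x k = Fx (\<lambda>i. \<phi> (traj_coords g x u (k + i))) \<and>
                    u k = Fu (\<lambda>i. \<phi> (traj_coords g x u (k + i))))"
  proof -
    fix x u assume a: "is_traj f x u" "\<forall>k. (x k, u k) \<in> Nf"
    have "\<forall>x u. is_traj f x u \<and> (\<forall>k. (x k, u k) \<in> Nf) \<longrightarrow>
               (\<forall>k. x k = Fx (\<lambda>i. \<phi> (traj_coords g x u (k + i))) \<and>
                    u k = Fu (\<lambda>i. \<phi> (traj_coords g x u (k + i))))" using NW by (elim conjE) assumption
    then show "\<forall>k. x k = Fx (\<lambda>i. \<phi> (traj_coords g x u (k + i))) \<and>
                    u k = Fu (\<lambda>i. \<phi> (traj_coords g x u (k + i)))" using a by simp
  qed
  have trajW: "is_traj f (\<lambda>k. Fx (\<lambda>i. y (k + i))) (\<lambda>k. Fu (\<lambda>i. y (k + i))) \<and>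
               (\<forall>k. y k = \<phi> (traj_coords g (\<lambda>k. Fx (\<lambda>i. y (k + i))) (\<lambda>k. Fu (\<lambda>i. y (k + i))) k))"
    if "\<forall>k. y k \<in> Wf" for y
  proof -
    have "let x = (\<lambda>k. Fx (\<lambda>i. y (k + i))); u = (\<lambda>k. Fu (\<lambda>i. y (k + i))) in
                  is_traj f x u \<and> (\<forall>k. y k = \<phi> (traj_coords g x u k))"
    proof -
      have "\<forall>y. (\<forall>k. y k \<in> Wf) \<longrightarrow>
               (let x = (\<lambda>k. Fx (\<lambda>i. y (k + i))); u = (\<lambda>k. Fu (\<lambda>i. y (k + i))) in
                  is_traj f x u \<and> (\<forall>k. y k = \<phi> (traj_coords g x u k)))" using NW by (elim conjE) assumption
      then have "(\<forall>k. y k \<in> Wf) \<longrightarrow> (let x = (\<lambda>k. Fx (\<lambda>i. y (k + i))); u = (\<lambda>k. Fu (\<lambda>i. y (k + i))) in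
                  is_traj f x u \<and> (\<forall>k. y k = \<phi> (traj_coords g x u k)))" by (rule spec)
      then show ?thesis using that by (rule mp)
    qed
    then show ?thesis unfolding Let_def .
  qed
  note Tf = Tf'
  have Fxy0: "Fx (\<lambda>_. y0) = x0" "Fu (\<lambda>_. y0) = u0"
  proof -
    have t1: "is_traj f (\<lambda>_. x0) (\<lambda>_. u0)" using eq by (simp add: is_traj_def)
    have t2: "\<forall>k. ((\<lambda>_. x0) k, (\<lambda>_. u0) k) \<in> Nf" using Nf(2) by simp
    have "\<forall>k. x0 = Fx (\<lambda>i. \<phi> (traj_coords g (\<lambda>_. x0) (\<lambda>_. u0) (k + i))) \<and>
        u0 = Fu (\<lambda>i. \<phi> (traj_coords g (\<lambda>_. x0) (\<lambda>_. u0) (k + i)))"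
      using trajN[OF t1 t2] by simp
    then have "x0 = Fx (\<lambda>i. \<phi> (traj_coords g (\<lambda>_. x0) (\<lambda>_. u0) (0 + i))) \<and>
        u0 = Fu (\<lambda>i. \<phi> (traj_coords g (\<lambda>_. x0) (\<lambda>_. u0) (0 + i)))" by (rule spec)
    then show "Fx (\<lambda>_. y0) = x0" "Fu (\<lambda>_. y0) = u0" by (simp_all add: tc_const y0_def)
  qed
  define \<zeta>0 where "\<zeta>0 = g x0 u0"
  have \<psi>0: "\<psi>x x0 \<zeta>0 = x0" "\<psi>u x0 \<zeta>0 = u0" "(x0, \<zeta>0) \<in> V"
    using GF[OF Nd(2)] eq by (simp_all add: \<zeta>0_def)
  define c0' where "c0' = traj_coords \<psi>u (\<lambda>_. x0) (\<lambda>_. \<zeta>0) 0"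
  have \<Phi>c0': "(\<lambda>i. if i = 0 then (\<psi>x (fst (c0' 0)) (snd (c0' 0)), \<psi>u (fst (c0' 0)) (snd (c0' 0)))
      else (0, snd (c0' (- i)))) = c0"
  proof (rule ext)
    fix i :: int
    consider "i = 0" | "i < 0" | "i > 0" by linarith
    then show "(if i = 0 then (\<psi>x (fst (c0' 0)) (snd (c0' 0)), \<psi>u (fst (c0' 0)) (snd (c0' 0)))
      else (0, snd (c0' (- i)))) = c0 i"
      by cases (simp_all add: c0'_def c0_def traj_coords_def \<psi>0 \<zeta>0_def[symmetric])
  qed
  have y0': "\<phi>' c0' = y0"
  proof -
    have "\<phi>' c0' = \<phi> (\<lambda>i. if i = 0 then (\<psi>x (fst (c0' 0)) (snd (c0' 0)), \<psi>u (fst (c0' 0)) (snd (c0' 0)))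
      else (0, snd (c0' (- i))))"
      by (rule agree) (simp_all add: c0'_def traj_coords_def \<psi>0 eq \<zeta>0_def[symmetric])
    then show ?thesis by (simp add: \<Phi>c0' y0_def)
  qed
  define \<Phi>1 :: "(int \<Rightarrow> 'u) \<Rightarrow> int \<Rightarrow> 'u" where "\<Phi>1 \<omega> = (\<lambda>j. \<omega> (-j-1))" for \<omega>
  define \<Phi>0 :: "(int \<Rightarrow> 'u) \<Rightarrow> int \<Rightarrow> 'u" where "\<Phi>0 \<omega> = (\<lambda>j. \<omega> (-j))" for \<omega>
  have cp1: "Cinf_seq_on UNIV (\<lambda>\<omega>. \<Phi>1 \<omega> i)" for i
    using Cinf_proj[OF bounded_linear_ident, of "-i-1"] by (simp add: \<Phi>1_def)
  have cp0: "Cinf_seq_on UNIV (\<lambda>\<omega>. \<Phi>0 \<omega> i)" for i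
    using Cinf_proj[OF bounded_linear_ident, of "-i"] by (simp add: \<Phi>0_def)
  have fin1: "finite {- int r1 .. int r2 - 1}" and fin2: "finite {- int r1 .. int r2}" by simp_all
  define A1 where "A1 = \<Phi>1 -` Tf \<inter> UNIV"
  have A1: "open A1" "Cinf_seq_on A1 (\<lambda>\<omega>. Fx (\<Phi>1 \<omega>))"
    using Cinf_compose_seq[OF Tf(2) fin1 dFx cp1 open_UNIV] by (simp_all add: A1_def)
  define A0 where "A0 = \<Phi>0 -` Tf \<inter> UNIV"
  have A0: "open A0" "Cinf_seq_on A0 (\<lambda>\<omega>. Fx (\<Phi>0 \<omega>))" "Cinf_seq_on A0 (\<lambda>\<omega>. Fu (\<Phi>0 \<omega>))"
    using Cinf_compose_seq[OF Tf(2) fin1 dFx cp0 open_UNIV] Cinf_compose_seq[OF Tf(3) fin2 dFu cp0 open_UNIV]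
    by (simp_all add: A0_def)
  define \<Phi>2 :: "(int \<Rightarrow> 'u) \<Rightarrow> int \<Rightarrow> 'x \<times> 'u" where "\<Phi>2 \<omega> = (\<lambda>i. (Fx (\<Phi>0 \<omega>), Fu (\<Phi>0 \<omega>)))" for \<omega>
  have cp2: "Cinf_seq_on A0 (\<lambda>\<omega>. \<Phi>2 \<omega> i)" for i
    using Cinf_pair[OF A0(2,3)] by (simp add: \<Phi>2_def)
  have Gc: "Cinf_seq_on {c. c 0 \<in> Nd} (\<lambda>c::int \<Rightarrow> 'x \<times> 'u. Fp (c 0))"
    by (rule Cinf_coord[OF Nd(5)])
  define A2 where "A2 = \<Phi>2 -` {c. c 0 \<in> Nd} \<inter> A0"
  have A2: "open A2" "Cinf_seq_on A2 (\<lambda>\<omega>. Fp (\<Phi>2 \<omega> 0))"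
    using Cinf_compose_seq[OF Gc _ depends_only_coord cp2 A0(1)] by (simp_all add: A2_def)
  define Fx' where "Fx' \<omega> = Fx (\<Phi>1 \<omega>)" for \<omega>
  define Fu' where "Fu' \<omega> = g (Fx (\<Phi>0 \<omega>)) (Fu (\<Phi>0 \<omega>))" for \<omega>
  have A2': "Cinf_seq_on A2 Fu'"
  proof -
    have "Cinf_seq_on A2 (\<lambda>\<omega>. snd (Fp (\<Phi>2 \<omega> 0)))" by (rule Cinf_lin[OF bounded_linear_snd A2(2)])
    then show ?thesis by (simp add: Fu'_def[abs_def] Fp_def \<Phi>2_def)
  qed
  define T' where "T' = A1 \<inter> A2"
  have T': "open T'" "(\<lambda>_. y0) \<in> T'" "Cinf_seq_on T' Fx'" "Cinf_seq_on T' Fu'"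
  proof -
    show o: "open T'" unfolding T'_def by (rule open_Int[OF A1(1) A2(1)])
    show "(\<lambda>_. y0) \<in> T'" using Tf(1) Nd(2) Fxy0 by (simp add: T'_def A1_def A2_def A0_def \<Phi>1_def \<Phi>0_def \<Phi>2_def)
    show "Cinf_seq_on T' Fx'" using Cinf_subset[OF A1(2) o] by (simp add: T'_def Fx'_def[abs_def])
    show "Cinf_seq_on T' Fu'" using Cinf_subset[OF A2' o] by (simp add: T'_def)
  qed
  have dFx': "depends_only {- int r2 .. int r1 - 1} Fx'"
    unfolding depends_only_def
  proof (intro allI impI)
    fix w w' :: "int \<Rightarrow> 'u" assume a: "\<forall>i\<in>{- int r2..int r1 - 1}. w i = w' i"
    have "\<forall>j\<in>{- int r1..int r2 - 1}. \<Phi>1 w j = \<Phi>1 w' j" using a by (auto simp: \<Phi>1_def)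
    then show "Fx' w = Fx' w'" using dFx unfolding depends_only_def Fx'_def by blast
  qed
  have dFu': "depends_only {- int r2 .. int r1} Fu'"
    unfolding depends_only_def
  proof (intro allI impI)
    fix w w' :: "int \<Rightarrow> 'u" assume a: "\<forall>i\<in>{- int r2..int r1}. w i = w' i"
    have "\<forall>j\<in>{- int r1..int r2}. \<Phi>0 w j = \<Phi>0 w' j" using a by (auto simp: \<Phi>0_def)
    moreover then have "\<forall>j\<in>{- int r1..int r2 - 1}. \<Phi>0 w j = \<Phi>0 w' j" by auto
    ultimately show "Fu' w = Fu' w'" using dFx dFu unfolding depends_only_def Fu'_def by metis
  qed
  define N' where "N' = Gp -` Nf \<inter> V"
  have N': "open N'" "(x0, \<zeta>0) \<in> N'"
  proof -
    have "\<forall>B. open B \<longrightarrow> open (Gp -` B \<inter> V)" using cG by (simp add: continuous_on_open_vimage[OF Vo])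
    then show "open N'" using Nf(1) by (simp add: N'_def)
    show "(x0, \<zeta>0) \<in> N'" using \<psi>0 Nf(2) by (simp add: N'_def Gp_def)
  qed
  define U where "U = (\<lambda>w. (Fx w, Fu w)) -` Nd \<inter> Tf"
  have "open U"
  proof -
    have "continuous_on Tf (\<lambda>w. (Fx w, Fu w))"
      using Cinf_cont[OF Tf(2)] Cinf_cont[OF Tf(3)] by (rule continuous_on_Pair)
    then have "\<forall>B. open B \<longrightarrow> open ((\<lambda>w. (Fx w, Fu w)) -` B \<inter> Tf)"
      by (simp add: continuous_on_open_vimage[OF Cinf_open[OF Tf(2)]])
    then show ?thesis using Nd(1) by (simp add: U_def)
  qed
  moreover have "(\<lambda>_. y0) \<in> U" using Tf(1) Nd(2) Fxy0 by (simp add: U_def)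
  ultimately obtain \<epsilon> where \<epsilon>: "\<epsilon> > 0" "\<And>p. (\<forall>i. dist (p i) y0 < \<epsilon>) \<Longrightarrow> p \<in> U"
    using open_fun_ball[of U "\<lambda>_. y0"] by auto
  define W' where "W' = Wf \<inter> ball y0 \<epsilon>"
  have W': "open W'" "y0 \<in> W'" using Wf \<epsilon>(1) by (auto simp: W'_def)
  have trajN': "\<forall>z v. is_traj \<psi>x z v \<and> (\<forall>k. (z k, v k) \<in> N') \<longrightarrow>
     (\<forall>k. z k = Fx' (\<lambda>i. \<phi>' (traj_coords \<psi>u z v (k + i))) \<and>
          v k = Fu' (\<lambda>i. \<phi>' (traj_coords \<psi>u z v (k + i))))"
  proof (rule allI, rule allI, rule impI)
    fix z v assume zv: "is_traj \<psi>x z v \<and> (\<forall>k. (z k, v k) \<in> N')"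
    have inV: "(z k, v k) \<in> V" and inNf: "Gp (z k, v k) \<in> Nf" for k
      using zv by (auto simp: N'_def)
    define x where "x t = z (-t)" for t
    define u where "u t = \<psi>u (z (-t-1)) (v (-t-1))" for t
    have K1: "\<psi>x (z k) (v k) = x (-k-1)" for k
    proof -
      have a: "z (k + 1) = \<psi>x (z k) (v k)" using zv by (simp add: is_traj_def)
      have b: "x (-k-1) = z (k + 1)" by (simp add: x_def add.commute)
      show ?thesis using a b by simp
    qed
    have K2: "\<psi>u (z k) (v k) = u (-k-1)" for k by (simp add: u_def)
    have K3: "v k = g (x (-k-1)) (u (-k-1))" for k using FG(2)[OF inV[of k]] K1 K2 by simp
    have K4: "z k = f (x (-k-1)) (u (-k-1))" for k using FG(1)[OF inV[of k]] K1 K2 by simp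
    have trj: "is_traj f x u" unfolding is_traj_def
    proof
      fix t
      have "x (t + 1) = z (-t-1)" by (simp add: x_def)
      also have "\<dots> = f (x (-(-t-1)-1)) (u (-(-t-1)-1))" by (rule K4)
      finally show "x (t + 1) = f (x t) (u t)" by simp
    qed
    have inN: "\<forall>t. (x t, u t) \<in> Nf"
    proof
      fix t
      have "Gp (z (-t-1), v (-t-1)) = (x (-(-t-1)-1), u (-(-t-1)-1))"
        using K1 K2 by (simp add: Gp_def)
      then show "(x t, u t) \<in> Nf" using inNf[of "-t-1"] by simp
    qed
    have xt: "\<forall>t. x t = Fx (\<lambda>i. \<phi> (traj_coords g x u (t + i))) \<and> u t = Fu (\<lambda>i. \<phi> (traj_coords g x u (t + i)))"
      using trajN[OF trj inN] .
    have C: "\<phi>' (traj_coords \<psi>u z v k) = \<phi> (traj_coords g x u (-k-1))" for k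
    proof -
      have "\<phi>' (traj_coords \<psi>u z v k) = \<phi> (\<lambda>i. if i = 0 then (\<psi>x (fst (traj_coords \<psi>u z v k 0)) (snd (traj_coords \<psi>u z v k 0)),
                             \<psi>u (fst (traj_coords \<psi>u z v k 0)) (snd (traj_coords \<psi>u z v k 0)))
             else (0, snd (traj_coords \<psi>u z v k (- i))))"
        by (rule agree) (simp_all add: traj_coords_def FG[OF inV[of k]])
      also have "\<dots> = \<phi> (traj_coords g x u (-k-1))" by (simp only: tc_lemma[where \<psi>x=\<psi>x and z=z and v=v and x=x and \<psi>u=\<psi>u and u=u and g=g and k=k, OF K1 K2 K3])
      finally show ?thesis .
    qed
    show "\<forall>k. z k = Fx' (\<lambda>i. \<phi>' (traj_coords \<psi>u z v (k + i))) \<and>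
          v k = Fu' (\<lambda>i. \<phi>' (traj_coords \<psi>u z v (k + i)))"
    proof
      fix k
      have e1: "\<Phi>1 (\<lambda>i. \<phi>' (traj_coords \<psi>u z v (k + i))) = (\<lambda>i. \<phi> (traj_coords g x u (-k + i)))"
      proof
        fix j
        have "-(k + (-j-1)) - 1 = -k + j" by simp
        then show "\<Phi>1 (\<lambda>i. \<phi>' (traj_coords \<psi>u z v (k + i))) j = \<phi> (traj_coords g x u (-k + j))"
          by (simp add: \<Phi>1_def C)
      qed
      have e0: "\<Phi>0 (\<lambda>i. \<phi>' (traj_coords \<psi>u z v (k + i))) = (\<lambda>i. \<phi> (traj_coords g x u (-k-1 + i)))"
      proof
        fix j
        have "-(k + - j) - 1 = -k - 1 + j" by simp
        have e2: "-k - 1 + j = j - k - 1" by simp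
        show "\<Phi>0 (\<lambda>i. \<phi>' (traj_coords \<psi>u z v (k + i))) j = \<phi> (traj_coords g x u (-k-1 + j))"
          unfolding e2 by (simp add: \<Phi>0_def C)
      qed
      have "z k = x (-k)" by (simp add: x_def)
      also have "\<dots> = Fx (\<lambda>i. \<phi> (traj_coords g x u (-k + i)))" using xt by blast
      also have "\<dots> = Fx' (\<lambda>i. \<phi>' (traj_coords \<psi>u z v (k + i)))" by (simp add: Fx'_def e1)
      finally have z: "z k = Fx' (\<lambda>i. \<phi>' (traj_coords \<psi>u z v (k + i)))" .
      have "v k = g (x (-k-1)) (u (-k-1))" by (rule K3)
      also have "\<dots> = g (Fx (\<lambda>i. \<phi> (traj_coords g x u (-k-1 + i)))) (Fu (\<lambda>i. \<phi> (traj_coords g x u (-k-1 + i))))"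
        using xt by metis
      also have "\<dots> = Fu' (\<lambda>i. \<phi>' (traj_coords \<psi>u z v (k + i)))" by (simp add: Fu'_def e0)
      finally show "z k = Fx' (\<lambda>i. \<phi>' (traj_coords \<psi>u z v (k + i))) \<and>
          v k = Fu' (\<lambda>i. \<phi>' (traj_coords \<psi>u z v (k + i)))" using z by simp
    qed
  qed
  have trajW': "\<forall>yh. (\<forall>k. yh k \<in> W') \<longrightarrow>
     (let z = (\<lambda>k. Fx' (\<lambda>i. yh (k + i))); v = (\<lambda>k. Fu' (\<lambda>i. yh (k + i))) in
        is_traj \<psi>x z v \<and> (\<forall>k. yh k = \<phi>' (traj_coords \<psi>u z v k)))"
  proof (rule allI, rule impI)
    fix yh :: "int \<Rightarrow> 'u" assume yh: "\<forall>k. yh k \<in> W'"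
    define y where "y t = yh (-t-1)" for t
    have yk: "y k \<in> Wf \<and> y k \<in> ball y0 \<epsilon>" for k
    proof -
      have "yh (-k-1) \<in> W'" using yh by (rule spec)
      then show ?thesis unfolding W'_def y_def by (rule IntE) (rule conjI)
    qed
    have yW: "\<forall>k. y k \<in> Wf" using yk by blast
    have yb: "dist (y k) y0 < \<epsilon>" for k
    proof -
      have "dist y0 (y k) < \<epsilon>" using yk[of k] by simp
      then show ?thesis using dist_commute[of "y k" y0] by linarith
    qed
    define xx where "xx = (\<lambda>k. Fx (\<lambda>i. y (k + i)))"
    define uu where "uu = (\<lambda>k. Fu (\<lambda>i. y (k + i)))"
    note tW0 = trajW[OF yW]
    have tW: "is_traj f xx uu" "\<forall>k. y k = \<phi> (traj_coords g xx uu k)"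
      unfolding xx_def uu_def by (rule conjunct1[OF tW0], rule conjunct2[OF tW0])
    have inNd: "(xx t, uu t) \<in> Nd" for t
    proof -
      have "(\<lambda>i. y (t + i)) \<in> U" by (rule \<epsilon>(2)) (intro allI yb)
      then show ?thesis unfolding U_def xx_def uu_def by simp
    qed
    define z where "z = (\<lambda>k. Fx' (\<lambda>i. yh (k + i)))"
    define v where "v = (\<lambda>k. Fu' (\<lambda>i. yh (k + i)))"
    have z: "z k = xx (-k)" for k
    proof -
      have "\<Phi>1 (\<lambda>i. yh (k + i)) = (\<lambda>i. y (-k + i))"
      proof
        fix j
        have ea: "k + (- j - 1) = k - j - 1" and eb: "-(-k + j) - 1 = k - j - 1" by simp_all
        show "\<Phi>1 (\<lambda>i. yh (k + i)) j = y (-k + j)" unfolding \<Phi>1_def y_def ea eb ..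
      qed
      then show ?thesis by (simp add: z_def Fx'_def xx_def)
    qed
    have v: "v k = g (xx (-k-1)) (uu (-k-1))" for k
    proof -
      have "\<Phi>0 (\<lambda>i. yh (k + i)) = (\<lambda>i. y (-k-1 + i))"
      proof
        fix j
        have ea: "k + - j = k - j" and eb: "-(-k - 1 + j) - 1 = k - j" by simp_all
        show "\<Phi>0 (\<lambda>i. yh (k + i)) j = y (-k - 1 + j)" unfolding \<Phi>0_def y_def ea eb ..
      qed
      then show ?thesis by (simp add: v_def Fu'_def xx_def uu_def)
    qed
    have zf: "z k = f (xx (-k-1)) (uu (-k-1))" for k
    proof -
      have a: "xx ((-k-1) + 1) = f (xx (-k-1)) (uu (-k-1))" using tW(1) unfolding is_traj_def by (rule spec)
      have e: "(-k-1) + 1 = -k" by simp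
      show ?thesis using a unfolding e z .
    qed
    have K1: "\<psi>x (z k) (v k) = xx (-k-1)" for k using GF(1)[OF inNd] zf v by simp
    have K2: "\<psi>u (z k) (v k) = uu (-k-1)" for k using GF(2)[OF inNd] zf v by simp
    have K3: "v k = g (xx (-k-1)) (uu (-k-1))" for k by (rule v)
    have trz: "is_traj \<psi>x z v"
      unfolding is_traj_def
    proof
      fix k
      have "z (k + 1) = xx (-k-1)" by (simp add: z)
      then show "z (k + 1) = \<psi>x (z k) (v k)" using K1 by simp
    qed
    have phys: "\<forall>k. yh k = \<phi>' (traj_coords \<psi>u z v k)"
    proof
      fix k
      have "\<phi>' (traj_coords \<psi>u z v k) = \<phi> (\<lambda>i. if i = 0 then (\<psi>x (fst (traj_coords \<psi>u z v k 0)) (snd (traj_coords \<psi>u z v k 0)),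
                             \<psi>u (fst (traj_coords \<psi>u z v k 0)) (snd (traj_coords \<psi>u z v k 0)))
             else (0, snd (traj_coords \<psi>u z v k (- i))))"
        by (rule agree) (simp_all add: traj_coords_def zf K3 GF(1)[OF inNd] GF(2)[OF inNd])
      also have "\<dots> = \<phi> (traj_coords g xx uu (-k-1))"
        by (simp only: tc_lemma[where \<psi>x=\<psi>x and z=z and v=v and x=xx and \<psi>u=\<psi>u and u=uu and g=g and k=k, OF K1 K2 K3])
      also have "\<dots> = y (-k-1)" using tW(2) by simp
      also have "\<dots> = yh k" by (simp add: y_def)
      finally show "yh k = \<phi>' (traj_coords \<psi>u z v k)" by simp
    qed
    show "let z = (\<lambda>k. Fx' (\<lambda>i. yh (k + i))); v = (\<lambda>k. Fu' (\<lambda>i. yh (k + i))) in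
        is_traj \<psi>x z v \<and> (\<forall>k. yh k = \<phi>' (traj_coords \<psi>u z v k))"
      unfolding Let_def z_def[symmetric] v_def[symmetric] using trz phys by (rule conjI)
  qed
  have part3: "\<exists>Fx Fu. depends_only {- int r2 .. int r1 - 1} Fx \<and> depends_only {- int r2 .. int r1} Fu \<and>
         (\<exists>T. (\<lambda>_. \<phi>' c0') \<in> T \<and> Cinf_seq_on T Fx \<and> Cinf_seq_on T Fu) \<and>
         (\<exists>N W. open N \<and> (x0, \<zeta>0) \<in> N \<and> open W \<and> \<phi>' c0' \<in> W \<and>
            (\<forall>z v. is_traj \<psi>x z v \<and> (\<forall>k. (z k, v k) \<in> N) \<longrightarrow>
               (\<forall>k. z k = Fx (\<lambda>i. \<phi>' (traj_coords \<psi>u z v (k + i))) \<and>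
                    v k = Fu (\<lambda>i. \<phi>' (traj_coords \<psi>u z v (k + i))))) \<and>
            (\<forall>y. (\<forall>k. y k \<in> W) \<longrightarrow>
               (let z = (\<lambda>k. Fx (\<lambda>i. y (k + i))); v = (\<lambda>k. Fu (\<lambda>i. y (k + i))) in
                  is_traj \<psi>x z v \<and> (\<forall>k. y k = \<phi>' (traj_coords \<psi>u z v k)))))"
  proof (rule exI[of _ Fx'], rule exI[of _ Fu'], intro conjI)
    show "depends_only {- int r2 .. int r1 - 1} Fx'" by (rule dFx')
    show "depends_only {- int r2 .. int r1} Fu'" by (rule dFu')
    show "\<exists>T. (\<lambda>_. \<phi>' c0') \<in> T \<and> Cinf_seq_on T Fx' \<and> Cinf_seq_on T Fu'"
      using T' y0' by blast
    show "\<exists>N W. open N \<and> (x0, \<zeta>0) \<in> N \<and> open W \<and> \<phi>' c0' \<in> W \<and>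
            (\<forall>z v. is_traj \<psi>x z v \<and> (\<forall>k. (z k, v k) \<in> N) \<longrightarrow>
               (\<forall>k. z k = Fx' (\<lambda>i. \<phi>' (traj_coords \<psi>u z v (k + i))) \<and>
                    v k = Fu' (\<lambda>i. \<phi>' (traj_coords \<psi>u z v (k + i))))) \<and>
            (\<forall>y. (\<forall>k. y k \<in> W) \<longrightarrow>
               (let z = (\<lambda>k. Fx' (\<lambda>i. y (k + i))); v = (\<lambda>k. Fu' (\<lambda>i. y (k + i))) in
                  is_traj \<psi>x z v \<and> (\<forall>k. y k = \<phi>' (traj_coords \<psi>u z v k))))"
      apply (rule exI[of _ N'], rule exI[of _ W'])
      apply (intro conjI)
      using N' W' y0' trajN' trajW' by simp_all
  qed
  show ?thesis
    unfolding flat_output_win_def Let_def[of "traj_coords \<psi>u (\<lambda>_. x0) (\<lambda>_. g x0 u0) 0"]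
      Let_def[of "\<phi>' (traj_coords \<psi>u (\<lambda>_. x0) (\<lambda>_. g x0 u0) 0)"]
    using dep' sm' part3 unfolding c0'_def \<zeta>0_def by (intro conjI)
qed

lemma assoc_dep:
  assumes "depends_only I \<phi>" "0 \<in> J" "\<And>i. i \<in> I \<Longrightarrow> - i \<in> J"
  shows "depends_only J (assoc_output \<psi>x \<psi>u \<phi>)"
  unfolding depends_only_def
proof (intro allI impI)
  fix c c' :: "int \<Rightarrow> 'a \<times> 'b" assume a: "\<forall>i\<in>J. c i = c' i"
  let ?A = "\<lambda>c::int \<Rightarrow> 'a \<times> 'b. (\<lambda>i. if i = 0
        then (\<psi>x (fst (c 0)) (snd (c 0)), \<psi>u (fst (c 0)) (snd (c 0)))
        else (0, snd (c (- i))))"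
  have D: "\<And>w w'. (\<forall>i\<in>I. w i = w' i) \<Longrightarrow> \<phi> w = \<phi> w'"
    using assms(1) unfolding depends_only_def by blast
  have E: "\<forall>i\<in>I. ?A c i = ?A c' i"
  proof
    fix i assume i: "i \<in> I"
    show "?A c i = ?A c' i"
    proof (cases "i = 0")
      case True then show ?thesis using a assms(2) by simp
    next
      case False then show ?thesis using a assms(3)[OF i] by simp
    qed
  qed
  have "\<phi> (?A c) = \<phi> (?A c')" by (rule D[OF E])
  then show "assoc_output \<psi>x \<psi>u \<phi> c = assoc_output \<psi>x \<psi>u \<phi> c'" by (simp add: assoc_output_def)
qed

lemma Cinf_assoc:
  fixes f :: "'x::euclidean_space \<Rightarrow> 'u::euclidean_space \<Rightarrow> 'x" and g :: "'x \<Rightarrow> 'u \<Rightarrow> 'u"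
    and \<psi>x :: "'x \<Rightarrow> 'u \<Rightarrow> 'x" and \<psi>u :: "'x \<Rightarrow> 'u \<Rightarrow> 'u"
    and \<phi> :: "(int \<Rightarrow> 'x \<times> 'u) \<Rightarrow> 'u"
  assumes diffeo: "local_diffeo_inv (\<lambda>p. (f (fst p) (snd p), g (fst p) (snd p)))
                                  (\<lambda>q. (\<psi>x (fst q) (snd q), \<psi>u (fst q) (snd q))) (x0, u0)"
    and eq: "f x0 u0 = x0"
    and dep: "\<exists>q1 q2::nat. depends_only {- int q1 .. int q2} \<phi>"
    and sm: "\<exists>S. traj_coords g (\<lambda>_. x0) (\<lambda>_. u0) 0 \<in> S \<and> Cinf_seq_on S \<phi>"
  shows "\<exists>S. traj_coords \<psi>u (\<lambda>_. x0) (\<lambda>_. g x0 u0) 0 \<in> S \<and> Cinf_seq_on S (assoc_output \<psi>x \<psi>u \<phi>)"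
proof -
  define Fp where "Fp = (\<lambda>p. (f (fst p) (snd p), g (fst p) (snd p)))"
  define Gp where "Gp = (\<lambda>q. (\<psi>x (fst q) (snd q), \<psi>u (fst q) (snd q)))"
  obtain Nd where Nd: "open Nd" "(x0,u0) \<in> Nd" "open (Fp ` Nd)" "\<forall>a\<in>Nd. Gp (Fp a) = a"
      "Cinf_on Nd Fp" "Cinf_on (Fp ` Nd) Gp"
    using diffeo unfolding local_diffeo_inv_def Fp_def Gp_def by blast
  define V where "V = Fp ` Nd"
  have V: "open V" "Cinf_on V Gp" using Nd by (simp_all add: V_def)
  have G0: "Gp (x0, g x0 u0) = (x0, u0)"
  proof -
    have "Gp (Fp (x0,u0)) = (x0,u0)" using Nd(2,4) by blast
    then show ?thesis using eq by (simp add: Fp_def)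
  qed
  then have \<psi>0: "\<psi>x x0 (g x0 u0) = x0" "\<psi>u x0 (g x0 u0) = u0" by (simp_all add: Gp_def)
  have inV: "(x0, g x0 u0) \<in> V"
  proof -
    have "Fp (x0, u0) \<in> V" using Nd(2) by (simp add: V_def)
    then show ?thesis using eq by (simp add: Fp_def)
  qed
  obtain q1 q2 :: nat where dq: "depends_only {- int q1 .. int q2} \<phi>" using dep by blast
  obtain S where S: "traj_coords g (\<lambda>_. x0) (\<lambda>_. u0) 0 \<in> S" "Cinf_seq_on S \<phi>" using sm by blast
  define \<Phi> :: "(int \<Rightarrow> 'x \<times> 'u) \<Rightarrow> int \<Rightarrow> 'x \<times> 'u" where
    "\<Phi> c = (\<lambda>i. if i = 0 then Gp (c 0) else (0, snd (c (- i))))" for c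
  define T0 :: "(int \<Rightarrow> 'x \<times> 'u) set" where "T0 = {c. c 0 \<in> V}"
  have cG: "Cinf_seq_on T0 (\<lambda>c. Gp (c 0))" unfolding T0_def by (rule Cinf_coord[OF V(2)])
  have T0: "open T0" using Cinf_open[OF cG] .
  have bl: "bounded_linear (\<lambda>p::'x \<times> 'u. ((0::'x), snd p))"
    by (rule bounded_linear_Pair[OF bounded_linear_zero bounded_linear_snd])
  have comp: "Cinf_seq_on T0 (\<lambda>c. \<Phi> c i)" for i
  proof (cases "i = 0")
    case True then show ?thesis using cG by (simp add: \<Phi>_def)
  next
    case False
    have "Cinf_seq_on UNIV (\<lambda>c::int \<Rightarrow> 'x \<times> 'u. ((0::'x), snd (c (- i))))"
      using Cinf_proj[OF bl, of "- i"] by simp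
    then have "Cinf_seq_on T0 (\<lambda>c::int \<Rightarrow> 'x \<times> 'u. ((0::'x), snd (c (- i))))"
      by (rule Cinf_subset[OF _ T0 subset_UNIV])
    then show ?thesis using False by (simp add: \<Phi>_def)
  qed
  have fin: "finite {- int q1 .. int q2}" by simp
  note cc = Cinf_compose_seq[OF S(2) fin dq comp T0]
  have eqA: "assoc_output \<psi>x \<psi>u \<phi> = (\<lambda>c. \<phi> (\<Phi> c))"
    unfolding assoc_output_def \<Phi>_def Gp_def by simp
  define c0' where "c0' = traj_coords \<psi>u (\<lambda>_. x0) (\<lambda>_. g x0 u0) 0"
  have "\<Phi> c0' = traj_coords g (\<lambda>_. x0) (\<lambda>_. u0) 0"
  proof (rule ext)
    fix i :: int
    consider "i = 0" | "i < 0" | "i > 0" by linarith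
    then show "\<Phi> c0' i = traj_coords g (\<lambda>_. x0) (\<lambda>_. u0) 0 i"
      by cases (simp_all add: \<Phi>_def c0'_def traj_coords_def G0 \<psi>0)
  qed
  then have m1: "\<Phi> c0' \<in> S" using S(1) by simp
  have m2: "c0' \<in> T0" using inV unfolding T0_def c0'_def traj_coords_def by simp
  have m: "c0' \<in> \<Phi> -` S \<inter> T0" using m1 m2 by simp
  have "traj_coords \<psi>u (\<lambda>_. x0) (\<lambda>_. g x0 u0) 0 \<in> \<Phi> -` S \<inter> T0" using m unfolding c0'_def .
  moreover have "Cinf_seq_on (\<Phi> -` S \<inter> T0) (assoc_output \<psi>x \<psi>u \<phi>)" unfolding eqA by (rule cc(2))
  ultimately show ?thesis by (intro exI[of _ "\<Phi> -` S \<inter> T0"] conjI)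
qed

lemma main_equiv:
  fixes f :: "'x::euclidean_space \<Rightarrow> 'u::euclidean_space \<Rightarrow> 'x"
    and g :: "'x \<Rightarrow> 'u \<Rightarrow> 'u"
    and \<psi>x :: "'x \<Rightarrow> 'u \<Rightarrow> 'x" and \<psi>u :: "'x \<Rightarrow> 'u \<Rightarrow> 'u"
    and x0 :: 'x and u0 :: 'u
    and \<phi> :: "(int \<Rightarrow> 'x \<times> 'u) \<Rightarrow> 'u"
  assumes equilibrium: "f x0 u0 = x0"
    and diffeo: "local_diffeo_inv (\<lambda>p. (f (fst p) (snd p), g (fst p) (snd p)))
                                  (\<lambda>q. (\<psi>x (fst q) (snd q), \<psi>u (fst q) (snd q))) (x0, u0)"
    and flat: "flat_output f g x0 u0 \<phi>"
  shows "flat_output_win f g x0 u0 \<phi> r1 r2 \<Longrightarrow> flat_output_win \<psi>x \<psi>u x0 (g x0 u0) (assoc_output \<psi>x \<psi>u \<phi>) r2 r1"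
    and "flat_output_win \<psi>x \<psi>u x0 (g x0 u0) (assoc_output \<psi>x \<psi>u \<phi>) r1 r2 \<Longrightarrow> flat_output_win f g x0 u0 \<phi> r2 r1"
proof -
  obtain s1 s2 where flw: "flat_output_win f g x0 u0 \<phi> s1 s2" using flat unfolding flat_output_def by blast
  have depphi: "\<exists>q1 q2::nat. depends_only {- int q1 .. int q2} \<phi>"
    using flw unfolding flat_output_win_def Let_def by (elim conjE) assumption
  have smphi: "\<exists>S. traj_coords g (\<lambda>_. x0) (\<lambda>_. u0) 0 \<in> S \<and> Cinf_seq_on S \<phi>"
    using flw unfolding flat_output_win_def Let_def by (elim conjE) assumption
  have depA: "\<exists>q1 q2::nat. depends_only {- int q1 .. int q2} (assoc_output \<psi>x \<psi>u \<phi>)"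
  proof -
    obtain q1 q2 :: nat where d: "depends_only {- int q1 .. int q2} \<phi>" using depphi by blast
    have "depends_only {- int q2 .. int q1} (assoc_output \<psi>x \<psi>u \<phi>)"
      by (rule assoc_dep[OF d]) auto
    then show ?thesis by blast
  qed
  have smA: "\<exists>S. traj_coords \<psi>u (\<lambda>_. x0) (\<lambda>_. g x0 u0) 0 \<in> S \<and> Cinf_seq_on S (assoc_output \<psi>x \<psi>u \<phi>)"
    by (rule Cinf_assoc[OF diffeo equilibrium depphi smphi])
  have G0: "\<psi>x x0 (g x0 u0) = x0" "\<psi>u x0 (g x0 u0) = u0"
  proof -
    obtain N where "(x0, u0) \<in> N" "\<forall>a\<in>N. (\<lambda>q. (\<psi>x (fst q) (snd q), \<psi>u (fst q) (snd q)))
       ((\<lambda>p. (f (fst p) (snd p), g (fst p) (snd p))) a) = a"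
      using diffeo unfolding local_diffeo_inv_def by blast
    then have "(\<psi>x (f x0 u0) (g x0 u0), \<psi>u (f x0 u0) (g x0 u0)) = (x0, u0)" by fastforce
    then show "\<psi>x x0 (g x0 u0) = x0" "\<psi>u x0 (g x0 u0) = u0" using equilibrium by simp_all
  qed
  show "flat_output_win \<psi>x \<psi>u x0 (g x0 u0) (assoc_output \<psi>x \<psi>u \<phi>) r2 r1"
    if "flat_output_win f g x0 u0 \<phi> r1 r2"
    by (rule transfer[OF diffeo equilibrium that depA smA]) (simp add: assoc_output_def)
  show "flat_output_win f g x0 u0 \<phi> r2 r1"
    if a: "flat_output_win \<psi>x \<psi>u x0 (g x0 u0) (assoc_output \<psi>x \<psi>u \<phi>) r1 r2"
  proof -
    have d2: "local_diffeo_inv (\<lambda>q. (\<psi>x (fst q) (snd q), \<psi>u (fst q) (snd q)))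
       (\<lambda>p. (f (fst p) (snd p), g (fst p) (snd p))) (x0, g x0 u0)"
      using local_diffeo_rev[OF diffeo] equilibrium by simp
    have sm2: "\<exists>S. traj_coords g (\<lambda>_. x0) (\<lambda>_. \<psi>u x0 (g x0 u0)) 0 \<in> S \<and> Cinf_seq_on S \<phi>"
      using smphi G0 by simp
    have ag: "\<phi> c = assoc_output \<psi>x \<psi>u \<phi> (\<lambda>i. if i = 0 then (f (fst (c 0)) (snd (c 0)), g (fst (c 0)) (snd (c 0)))
                      else (0, snd (c (- i))))"
      if n: "\<forall>i. i \<noteq> 0 \<longrightarrow> fst (c i) = 0"
        and e1: "\<psi>x (f (fst (c 0)) (snd (c 0))) (g (fst (c 0)) (snd (c 0))) = fst (c 0)"
        and e2: "\<psi>u (f (fst (c 0)) (snd (c 0))) (g (fst (c 0)) (snd (c 0))) = snd (c 0)" for c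
    proof -
      have "(\<lambda>i. if i = 0 then (\<psi>x (fst ((\<lambda>i. if i = 0 then (f (fst (c 0)) (snd (c 0)), g (fst (c 0)) (snd (c 0)))
                      else (0, snd (c (- i)))) 0)) (snd ((\<lambda>i. if i = 0 then (f (fst (c 0)) (snd (c 0)), g (fst (c 0)) (snd (c 0)))
                      else (0, snd (c (- i)))) 0)),
                \<psi>u (fst ((\<lambda>i. if i = 0 then (f (fst (c 0)) (snd (c 0)), g (fst (c 0)) (snd (c 0)))
                      else (0, snd (c (- i)))) 0)) (snd ((\<lambda>i. if i = 0 then (f (fst (c 0)) (snd (c 0)), g (fst (c 0)) (snd (c 0)))
                      else (0, snd (c (- i)))) 0)))
           else (0, snd ((\<lambda>i. if i = 0 then (f (fst (c 0)) (snd (c 0)), g (fst (c 0)) (snd (c 0)))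
                      else (0, snd (c (- i)))) (- i)))) = c"
      proof (rule ext)
        fix i :: int
        show "(if i = 0 then (\<psi>x (fst ((\<lambda>i. if i = 0 then (f (fst (c 0)) (snd (c 0)), g (fst (c 0)) (snd (c 0)))
                      else (0, snd (c (- i)))) 0)) (snd ((\<lambda>i. if i = 0 then (f (fst (c 0)) (snd (c 0)), g (fst (c 0)) (snd (c 0)))
                      else (0, snd (c (- i)))) 0)),
                \<psi>u (fst ((\<lambda>i. if i = 0 then (f (fst (c 0)) (snd (c 0)), g (fst (c 0)) (snd (c 0)))
                      else (0, snd (c (- i)))) 0)) (snd ((\<lambda>i. if i = 0 then (f (fst (c 0)) (snd (c 0)), g (fst (c 0)) (snd (c 0)))
                      else (0, snd (c (- i)))) 0)))
           else (0, snd ((\<lambda>i. if i = 0 then (f (fst (c 0)) (snd (c 0)), g (fst (c 0)) (snd (c 0)))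
                      else (0, snd (c (- i)))) (- i)))) = c i"
        proof (cases "i = 0")
          case True then show ?thesis using e1 e2 by simp
        next
          case False
          then have "fst (c i) = 0" using n by blast
          then have "c i = (0, snd (c i))" by (metis prod.collapse)
          then show ?thesis using False by simp
        qed
      qed
      then show ?thesis unfolding assoc_output_def by simp
    qed
    have "flat_output_win f g x0 (\<psi>u x0 (g x0 u0)) \<phi> r2 r1"
      by (rule transfer[OF d2 G0(1) a depphi sm2 ag])
    then show ?thesis using G0 by simp
  qed
qed

theorem corollary1:
  fixes f :: "'x::euclidean_space \<Rightarrow> 'u::euclidean_space \<Rightarrow> 'x"
    and g :: "'x \<Rightarrow> 'u \<Rightarrow> 'u"
    and \<psi>x :: "'x \<Rightarrow> 'u \<Rightarrow> 'x" and \<psi>u :: "'x \<Rightarrow> 'u \<Rightarrow> 'u"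
    and x0 :: 'x and u0 :: 'u
    and \<phi> :: "(int \<Rightarrow> 'x \<times> 'u) \<Rightarrow> 'u"
  assumes f_smooth: "Cinf_on UNIV (\<lambda>p. f (fst p) (snd p))"
    and g_smooth: "Cinf_on UNIV (\<lambda>p. g (fst p) (snd p))"
    and rank_u: "\<forall>x u. dim (range (frechet_derivative (\<lambda>v. f x v) (at u))) = DIM('u)"
    and rank_xu: "\<forall>x u. dim (range (frechet_derivative (\<lambda>p. f (fst p) (snd p)) (at (x, u)))) = DIM('x)"
    and equilibrium: "f x0 u0 = x0"
    and diffeo: "local_diffeo_inv (\<lambda>p. (f (fst p) (snd p), g (fst p) (snd p)))
                                  (\<lambda>q. (\<psi>x (fst q) (snd q), \<psi>u (fst q) (snd q))) (x0, u0)"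
    and flat: "flat_output f g x0 u0 \<phi>"
  shows "(depends_only {i. 0 \<le> i} \<phi> \<longrightarrow>
            (backward_flat_output \<psi>x \<psi>u x0 (g x0 u0) (assoc_output \<psi>x \<psi>u \<phi>)
               \<longleftrightarrow> forward_flat_output f g x0 u0 \<phi>))
       \<and> (depends_only {i. i \<le> 0} \<phi> \<longrightarrow>
            (forward_flat_output \<psi>x \<psi>u x0 (g x0 u0) (assoc_output \<psi>x \<psi>u \<phi>)
               \<longleftrightarrow> backward_flat_output f g x0 u0 \<phi>))"
proof (intro conjI impI)
  note F = main_equiv[OF equilibrium diffeo flat]
  assume dp: "depends_only {i. 0 \<le> i} \<phi>"
  have dA: "depends_only {i. i \<le> 0} (assoc_output \<psi>x \<psi>u \<phi>)" by (rule assoc_dep[OF dp]) auto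
  show "backward_flat_output \<psi>x \<psi>u x0 (g x0 u0) (assoc_output \<psi>x \<psi>u \<phi>)
               \<longleftrightarrow> forward_flat_output f g x0 u0 \<phi>"
  proof
    assume "backward_flat_output \<psi>x \<psi>u x0 (g x0 u0) (assoc_output \<psi>x \<psi>u \<phi>)"
    then obtain r1 where "flat_output_win \<psi>x \<psi>u x0 (g x0 u0) (assoc_output \<psi>x \<psi>u \<phi>) r1 0"
      unfolding backward_flat_output_def by blast
    then have "flat_output_win f g x0 u0 \<phi> 0 r1" by (rule F(2))
    then show "forward_flat_output f g x0 u0 \<phi>" using dp unfolding forward_flat_output_def by blast
  next
    assume "forward_flat_output f g x0 u0 \<phi>"
    then obtain r2 where "flat_output_win f g x0 u0 \<phi> 0 r2"
      unfolding forward_flat_output_def by blast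
    then have "flat_output_win \<psi>x \<psi>u x0 (g x0 u0) (assoc_output \<psi>x \<psi>u \<phi>) r2 0" by (rule F(1))
    then show "backward_flat_output \<psi>x \<psi>u x0 (g x0 u0) (assoc_output \<psi>x \<psi>u \<phi>)"
      using dA unfolding backward_flat_output_def by blast
  qed
next
  note F = main_equiv[OF equilibrium diffeo flat]
  assume dp: "depends_only {i. i \<le> 0} \<phi>"
  have dA: "depends_only {i. 0 \<le> i} (assoc_output \<psi>x \<psi>u \<phi>)" by (rule assoc_dep[OF dp]) auto
  show "forward_flat_output \<psi>x \<psi>u x0 (g x0 u0) (assoc_output \<psi>x \<psi>u \<phi>)
               \<longleftrightarrow> backward_flat_output f g x0 u0 \<phi>"
  proof
    assume "forward_flat_output \<psi>x \<psi>u x0 (g x0 u0) (assoc_output \<psi>x \<psi>u \<phi>)"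
    then obtain r2 where "flat_output_win \<psi>x \<psi>u x0 (g x0 u0) (assoc_output \<psi>x \<psi>u \<phi>) 0 r2"
      unfolding forward_flat_output_def by blast
    then have "flat_output_win f g x0 u0 \<phi> r2 0" by (rule F(2))
    then show "backward_flat_output f g x0 u0 \<phi>" using dp unfolding backward_flat_output_def by blast
  next
    assume "backward_flat_output f g x0 u0 \<phi>"
    then obtain r1 where "flat_output_win f g x0 u0 \<phi> r1 0"
      unfolding backward_flat_output_def by blast
    then have "flat_output_win \<psi>x \<psi>u x0 (g x0 u0) (assoc_output \<psi>x \<psi>u \<phi>) 0 r1" by (rule F(1))
    then show "forward_flat_output \<psi>x \<psi>u x0 (g x0 u0) (assoc_output \<psi>x \<psi>u \<phi>)"
      using dA unfolding forward_flat_output_def by blast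
  qed
qed

end
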